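(* Let $\mathcal{L}$ be the set of the $81$ lines in $\mathbb{P}^2_{\mathbb{C}}$ that contain at least three sextactic points of the Fermat cubic (see context). For each $L\in\mathcal{L}$ choose a linear form $\ell_L\in\mathbb{C}[x,y,z]$ defining $L$. Then there is a nonzero constant $c\in\mathbb{C}$ such that $$c\prod_{L\in\mathcal{L}}\ell_L\in\mathbb{Z}[x,y,z].$$ That is, the product of the equations of the $81$ lines is defined over $\mathbb{Z}$.
   Context: $F\subset\mathbb{P}^2_{\mathbb{C}}$ is the Fermat cubic $x^3+y^3+z^3=0$. The set of its sextactic points is $$S=\{[x:y:z]\in\mathbb{P}^2: x^3+y^3+z^3=0,\ (x^3-y^3)(y^3-z^3)(z^3-x^3)=0\}.$$ These are the $27$ points of $F$ at which the osculating conic has local contact order at least $6$ with $F$. There are exactly $81$ lines containing at least (in fact exactly) three points of $S$. *)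

theory Defs
  imports Complex_Main "HOL-Library.Poly_Mapping"
begin

text \<open>Homogeneous coordinates: a point of P^2(C) is represented by a nonzero
  vector of C^3 (a triple), two vectors representing the same point iff proportional.\<close>

type_synonym vec3 = "complex \<times> complex \<times> complex"

definition nonzero3 :: "vec3 \<Rightarrow> bool" where
  "nonzero3 v \<longleftrightarrow> v \<noteq> (0, 0, 0)"

definition same_point :: "vec3 \<Rightarrow> vec3 \<Rightarrow> bool" where
  "same_point u v \<longleftrightarrow> (\<exists>t::complex. t \<noteq> 0 \<and>
      u = (t * fst v, t * fst (snd v), t * snd (snd v)))"

definition sextactic :: "vec3 \<Rightarrow> bool" where
  "sextactic v \<longleftrightarrow> (case v of (x, y, z) \<Rightarrow>
      nonzero3 v \<and> x^3 + y^3 + z^3 = 0 \<and> (x^3 - y^3) * (y^3 - z^3) * (z^3 - x^3) = 0)"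

definition line_of :: "vec3 \<Rightarrow> vec3 set" where
  "line_of a = {v. nonzero3 v \<and>
      fst a * fst v + fst (snd a) * fst (snd v) + snd (snd a) * snd (snd v) = 0}"

definition is_line :: "vec3 set \<Rightarrow> bool" where
  "is_line L \<longleftrightarrow> (\<exists>a. nonzero3 a \<and> L = line_of a)"

definition sextactic_lines :: "vec3 set set" where
  "sextactic_lines = {L. is_line L \<and>
     (\<exists>p q r. p \<in> L \<and> q \<in> L \<and> r \<in> L \<and> sextactic p \<and> sextactic q \<and> sextactic r \<and>
        \<not> same_point p q \<and> \<not> same_point q r \<and> \<not> same_point p r)}"

text \<open>Polynomials in C[x,y,z]: finitely supported maps from monomials
  (exponent vectors as finitely supported nat-valued maps, variables 0,1,2) to coefficients.\<close>
type_synonym cpoly3 = "(nat \<Rightarrow>\<^sub>0 nat) \<Rightarrow>\<^sub>0 complex"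

definition pconst :: "complex \<Rightarrow> cpoly3" where
  "pconst c = Poly_Mapping.single 0 c"

definition pvar :: "nat \<Rightarrow> cpoly3" where
  "pvar i = Poly_Mapping.single (Poly_Mapping.single i 1) 1"

definition linform :: "vec3 \<Rightarrow> cpoly3" where
  "linform a = pconst (fst a) * pvar 0 + pconst (fst (snd a)) * pvar 1 + pconst (snd (snd a)) * pvar 2"

definition integral_poly :: "cpoly3 \<Rightarrow> bool" where
  "integral_poly p \<longleftrightarrow> (\<forall>m. Poly_Mapping.lookup p m \<in> \<int>)"

end

theory Submission
  imports Defs
begin

definition ww :: complex where "ww = Complex (-1/2) (sqrt 3 / 2)"
definition th :: complex where "th = of_real (root 3 2)"

lemma ww2: "ww^2 + ww + 1 = 0"
  by (simp add: ww_def complex_eq_iff power2_eq_square)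
lemma ww3: "ww^3 = 1"
proof -
  have "ww^3 - 1 = (ww - 1) * (ww^2 + ww + 1)" by (simp add: algebra_simps power2_eq_square power3_eq_cube)
  thus ?thesis using ww2 by simp
qed
lemma ww2': "ww^2 = -1 - ww" using ww2 by (simp add: algebra_simps eq_neg_iff_add_eq_0)
lemma th3: "th^3 = 2"
  unfolding th_def by (simp flip: of_real_power)
lemma th_real: "th = of_real (root 3 2)" by (simp add: th_def)

datatype q6 = Q int int int int int int

fun m3 :: "int\<times>int\<times>int \<Rightarrow> int\<times>int\<times>int \<Rightarrow> int\<times>int\<times>int" where
 "m3 (a,b,c) (d,e,f) = (a*d+2*(b*f+c*e), a*e+b*d+2*c*f, a*f+b*e+c*d)"
fun qmul :: "q6 \<Rightarrow> q6 \<Rightarrow> q6" where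
 "qmul (Q a0 a1 a2 b0 b1 b2) (Q c0 c1 c2 d0 d1 d2) =
   (case m3 (a0,a1,a2) (c0,c1,c2) of (x0,x1,x2) \<Rightarrow>
    case m3 (b0,b1,b2) (d0,d1,d2) of (y0,y1,y2) \<Rightarrow>
    case m3 (a0,a1,a2) (d0,d1,d2) of (u0,u1,u2) \<Rightarrow>
    case m3 (b0,b1,b2) (c0,c1,c2) of (v0,v1,v2) \<Rightarrow>
    Q (x0-y0) (x1-y1) (x2-y2) (u0+v0-y0) (u1+v1-y1) (u2+v2-y2))"
fun qadd :: "q6 \<Rightarrow> q6 \<Rightarrow> q6" where
 "qadd (Q a0 a1 a2 b0 b1 b2) (Q c0 c1 c2 d0 d1 d2) = Q (a0+c0) (a1+c1) (a2+c2) (b0+d0) (b1+d1) (b2+d2)"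
fun qneg :: "q6 \<Rightarrow> q6" where
 "qneg (Q a0 a1 a2 b0 b1 b2) = Q (-a0) (-a1) (-a2) (-b0) (-b1) (-b2)"
definition "qsub x y = qadd x (qneg y)"
definition "q0 = Q 0 0 0 0 0 0"
definition "q1 = Q 1 0 0 0 0 0"
definition "qw = Q 0 0 0 1 0 0"
definition "qt = Q 0 1 0 0 0 0"
definition "mt = Q 0 (-1) 0 0 0 0"
fun qwp :: "nat \<Rightarrow> q6" where
 "qwp 0 = q1" | "qwp (Suc 0) = qw" | "qwp (Suc (Suc 0)) = Q (-1) 0 0 (-1) 0 0" | "qwp _ = q1"
type_synonym qv = "q6 \<times> q6 \<times> q6"
fun qdot :: "qv \<Rightarrow> qv \<Rightarrow> q6" where
 "qdot (a,b,c) (d,e,f) = qadd (qadd (qmul a d) (qmul b e)) (qmul c f)"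
fun qcross :: "qv \<Rightarrow> qv \<Rightarrow> qv" where
 "qcross (a,b,c) (d,e,f) = (qsub (qmul b f) (qmul c e), qsub (qmul c d) (qmul a f), qsub (qmul a e) (qmul b d))"

fun e3 :: "int\<times>int\<times>int \<Rightarrow> complex" where
 "e3 (a,b,c) = of_int a + of_int b * th + of_int c * th^2"

lemma e3_mul: "e3 (m3 x y) = e3 x * e3 y"
proof -
  obtain a b c where x: "x = (a,b,c)" by (cases x) auto
  obtain d e f where y: "y = (d,e,f)" by (cases y) auto
  have "e3 x * e3 y = e3 (m3 x y) + (th^3 - 2) * (of_int (b*f+c*e) + of_int (c*f) * th)"
    unfolding x y by (simp add: algebra_simps power2_eq_square power3_eq_cube)
  thus ?thesis using th3 by simp
qed

fun ev :: "q6 \<Rightarrow> complex" where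
 "ev (Q a0 a1 a2 b0 b1 b2) = e3 (a0,a1,a2) + ww * e3 (b0,b1,b2)"

lemma e3_add: "e3 (a+d, b+e, c+f) = e3 (a,b,c) + e3 (d,e,f)"
  by (simp add: algebra_simps)
lemma e3_sub: "e3 (a-d, b-e, c-f) = e3 (a,b,c) - e3 (d,e,f)"
  by (simp add: algebra_simps)
lemma e3_neg: "e3 (-a, -b, -c) = - e3 (a,b,c)"
  by (simp add: algebra_simps)

lemma ev_add: "ev (qadd x y) = ev x + ev y"
  by (cases x; cases y) (simp only: qadd.simps ev.simps e3_add, simp add: algebra_simps)
lemma ev_neg: "ev (qneg x) = - ev x"
  by (cases x) (simp only: qneg.simps ev.simps e3_neg, simp add: algebra_simps)
lemma ev_sub: "ev (qsub x y) = ev x - ev y"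
  by (simp add: qsub_def ev_add ev_neg)

lemma ev_mul: "ev (qmul x y) = ev x * ev y"
proof (cases x; cases y)
  fix a0 a1 a2 b0 b1 b2 c0 c1 c2 d0 d1 d2
  assume x: "x = Q a0 a1 a2 b0 b1 b2" and y: "y = Q c0 c1 c2 d0 d1 d2"
  obtain x0 x1 x2 where X: "m3 (a0,a1,a2) (c0,c1,c2) = (x0,x1,x2)" by (metis prod_cases3)
  obtain y0 y1 y2 where Y: "m3 (b0,b1,b2) (d0,d1,d2) = (y0,y1,y2)" by (metis prod_cases3)
  obtain u0 u1 u2 where U: "m3 (a0,a1,a2) (d0,d1,d2) = (u0,u1,u2)" by (metis prod_cases3)
  obtain v0 v1 v2 where V: "m3 (b0,b1,b2) (c0,c1,c2) = (v0,v1,v2)" by (metis prod_cases3)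
  have eX: "e3 (x0,x1,x2) = e3 (a0,a1,a2) * e3 (c0,c1,c2)" using e3_mul X by metis
  have eY: "e3 (y0,y1,y2) = e3 (b0,b1,b2) * e3 (d0,d1,d2)" using e3_mul Y by metis
  have eU: "e3 (u0,u1,u2) = e3 (a0,a1,a2) * e3 (d0,d1,d2)" using e3_mul U by metis
  have eV: "e3 (v0,v1,v2) = e3 (b0,b1,b2) * e3 (c0,c1,c2)" using e3_mul V by metis
  have "ev (qmul x y) = e3 (x0-y0, x1-y1, x2-y2) + ww * e3 (u0+v0-y0, u1+v1-y1, u2+v2-y2)"
    unfolding x y by (simp only: qmul.simps X Y U V prod.case ev.simps)
  also have "\<dots> = e3 (x0,x1,x2) - e3 (y0,y1,y2) + ww * (e3 (u0,u1,u2) + e3 (v0,v1,v2) - e3 (y0,y1,y2))"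
    by (simp only: e3_sub e3_add diff_add_eq[symmetric])
  also have "\<dots> = ev x * ev y + (ww^2 + ww + 1) * (- e3 (b0,b1,b2) * e3 (d0,d1,d2))"
    unfolding x y ev.simps eX eY eU eV by (simp add: algebra_simps power2_eq_square del: e3.simps)
  finally show ?thesis using ww2 by simp
qed

lemma norm3_zero:
  fixes a b c :: int
  assumes "a^3 + 2*b^3 + 4*c^3 = 6*a*b*c"
  shows "a = 0 \<and> b = 0 \<and> c = 0"
  using assms
proof (induction "nat (\<bar>a\<bar> + \<bar>b\<bar> + \<bar>c\<bar>)" arbitrary: a b c rule: less_induct)
  case less
  have "even (a^3)"
  proof -
    have "a^3 = 2*(3*a*b*c - b^3 - 2*c^3)" using less.prems by (simp add: algebra_simps)
    thus ?thesis by simp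
  qed
  then obtain d where d: "a = 2*d" by auto
  have "even (b^3)"
  proof -
    have "b^3 = 2*(3*d*b*c - 2*d^3 - c^3)" using less.prems unfolding d by (simp add: algebra_simps power3_eq_cube)
    thus ?thesis by simp
  qed
  then obtain e where e: "b = 2*e" by auto
  have "even (c^3)"
  proof -
    have "c^3 = 2*(3*d*e*c - d^3 - 2*e^3)" using less.prems unfolding d e by (simp add: algebra_simps power3_eq_cube)
    thus ?thesis by simp
  qed
  then obtain f where f: "c = 2*f" by auto
  have eq: "d^3 + 2*e^3 + 4*f^3 = 6*d*e*f" using less.prems unfolding d e f by (simp add: algebra_simps power3_eq_cube)
  show ?case
  proof (cases "a = 0 \<and> b = 0 \<and> c = 0")
    case True thus ?thesis .
  next
    case False
    hence "nat (\<bar>d\<bar> + \<bar>e\<bar> + \<bar>f\<bar>) < nat (\<bar>a\<bar> + \<bar>b\<bar> + \<bar>c\<bar>)" unfolding d e f by auto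
    from less.hyps[OF this eq] show ?thesis unfolding d e f by simp
  qed
qed

definition "rr = root 3 (2::real)"
lemma rr3: "rr^3 = 2" by (simp add: rr_def)
lemma e3_real: "e3 (a,b,c) = of_real (of_int a + of_int b * rr + of_int c * rr^2)"
  by (simp add: th_def rr_def)

lemma e3_zero: assumes "e3 (a,b,c) = 0" shows "a = 0 \<and> b = 0 \<and> c = 0"
proof -
  define A where "A = (of_int a :: real)"
  define B where "B = (of_int b :: real)"
  define C where "C = (of_int c :: real)"
  have f: "A + B * rr + C * rr^2 = 0" using assms unfolding A_def B_def C_def by (simp only: e3_real of_real_eq_0_iff)
  have "(A + B * rr + C * rr^2) * ((A^2 - 2*B*C) + (2*C^2 - A*B) * rr + (B^2 - A*C) * rr^2)
     = A^3 + 2*B^3 + 4*C^3 - 6*A*B*C + (rr^3 - 2) * ((B^3 + 2*C^3 - 2*A*B*C) + (B^2*C - A*C^2) * rr)"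
    by (simp add: algebra_simps power2_eq_square power3_eq_cube)
  hence "A^3 + 2*B^3 + 4*C^3 - 6*A*B*C = 0" using f rr3 by simp
  hence "of_int (a^3 + 2*b^3 + 4*c^3 - 6*a*b*c) = (0::real)" by (simp add: A_def B_def C_def)
  hence "a^3 + 2*b^3 + 4*c^3 = 6*a*b*c" by (simp only: of_int_eq_0_iff)
  thus ?thesis by (rule norm3_zero)
qed

lemma ev_zero: assumes "ev (Q a0 a1 a2 b0 b1 b2) = 0"
  shows "Q a0 a1 a2 b0 b1 b2 = q0"
proof -
  define x where "x = of_int a0 + of_int a1 * rr + of_int a2 * rr^2"
  define y where "y = of_int b0 + of_int b1 * rr + of_int b2 * rr^2"
  have "of_real x + ww * of_real y = 0" using assms unfolding x_def y_def by (simp only: ev.simps e3_real)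
  hence "Im (of_real x + ww * of_real y) = 0" "Re (of_real x + ww * of_real y) = 0" by simp_all
  hence "y * (sqrt 3 / 2) = 0" "x - y/2 = 0" by (simp_all add: ww_def)
  hence "y = 0" "x = 0" by auto
  hence "e3 (b0,b1,b2) = 0" "e3 (a0,a1,a2) = 0" unfolding x_def y_def by (simp_all only: e3_real of_real_0)
  from e3_zero[OF this(1)] e3_zero[OF this(2)] show ?thesis by (simp add: q0_def)
qed

lemma ev_nz: "x \<noteq> q0 \<Longrightarrow> ev x \<noteq> 0"
  by (cases x) (use ev_zero in blast)

fun hz :: "q6 \<Rightarrow> int" where
 "hz (Q a0 a1 a2 b0 b1 b2) = a0 + 4*a1 + 16*a2 + 5*b0 + 20*b1 + 80*b2"
definition "hm x = hz x mod 31"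

lemma hz_mul: "hz (qmul (Q a0 a1 a2 a3 a4 a5) (Q c0 c1 c2 c3 c4 c5)) =
   hz (Q a0 a1 a2 a3 a4 a5) * hz (Q c0 c1 c2 c3 c4 c5) + 31 * ((-2)*a1*c2 + (-10)*a1*c5 + (-2)*a2*c1 + (-8)*a2*c2 + (-10)*a2*c4 + (-40)*a2*c5 + (-1)*a3*c3 + (-4)*a3*c4 + (-16)*a3*c5 + (-10)*a4*c2 + (-4)*a4*c3 + (-16)*a4*c4 + (-52)*a4*c5 + (-10)*a5*c1 + (-40)*a5*c2 + (-16)*a5*c3 + (-52)*a5*c4 + (-208)*a5*c5)"
  by (simp add: algebra_simps)
lemma hm_mul: "hm (qmul x y) = (hm x * hm y) mod 31"
proof (cases x; cases y)
  fix a0 a1 a2 a3 a4 a5 c0 c1 c2 c3 c4 c5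
  assume x: "x = Q a0 a1 a2 a3 a4 a5" and y: "y = Q c0 c1 c2 c3 c4 c5"
  show ?thesis unfolding x y hm_def hz_mul mod_mult_self2 by (metis mod_mult_eq)
qed
lemma hm_add: "hm (qadd x y) = (hm x + hm y) mod 31"
proof (cases x; cases y)
  fix a0 a1 a2 a3 a4 a5 c0 c1 c2 c3 c4 c5
  assume x: "x = Q a0 a1 a2 a3 a4 a5" and y: "y = Q c0 c1 c2 c3 c4 c5"
  have "hz (qadd x y) = hz x + hz y" unfolding x y by (simp add: algebra_simps)
  thus ?thesis unfolding hm_def by (simp add: mod_add_eq)
qed
lemma hm_neg: "hm (qneg x) = (- hm x) mod 31"
proof (cases x)
  fix a0 a1 a2 a3 a4 a5
  assume x: "x = Q a0 a1 a2 a3 a4 a5"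
  have "hz (qneg x) = - hz x" unfolding x by (simp add: algebra_simps)
  thus ?thesis unfolding hm_def by (simp add: mod_minus_eq)
qed
lemma hm_sub: "hm (qsub x y) = (hm x - hm y) mod 31"
  unfolding qsub_def hm_add hm_neg by (simp add: mod_simps)

fun fdot :: "int\<times>int\<times>int \<Rightarrow> int\<times>int\<times>int \<Rightarrow> int" where
  "fdot (a,b,c) (d,e,f) = (a*d + b*e + c*f) mod 31"
fun fcross :: "int\<times>int\<times>int \<Rightarrow> int\<times>int\<times>int \<Rightarrow> int\<times>int\<times>int" where
  "fcross (a,b,c) (d,e,f) = ((b*f - c*e) mod 31, (c*d - a*f) mod 31, (a*e - b*d) mod 31)"
fun hmv :: "qv \<Rightarrow> int\<times>int\<times>int" where
  "hmv (x,y,z) = (hm x, hm y, hm z)"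

lemma hm_dot: "hm (qdot p q) = fdot (hmv p) (hmv q)"
  by (cases p; cases q) (simp add: hm_add hm_mul mod_simps)
lemma hm_cross: "hmv (qcross p q) = fcross (hmv p) (hmv q)"
  by (cases p; cases q) (simp add: hm_sub hm_mul mod_simps)

definition pts :: "qv list" where "pts =
  [(q1, qwp a, qmul mt (qwp b)). a \<leftarrow> [0,1,2], b \<leftarrow> [0,1,2]] @
  [(qmul mt (qwp b), q1, qwp a). a \<leftarrow> [0,1,2], b \<leftarrow> [0,1,2]] @
  [(qwp a, qmul mt (qwp b), q1). a \<leftarrow> [0,1,2], b \<leftarrow> [0,1,2]]"
definition "qal = Q 1 1 0 0 0 0"
definition "qbe = Q (-1) 0 0 0 0 1"
definition "qga = Q 1 0 0 0 1 0"
definition "lnsF1 = concat [[(q1, qneg (qwp i), q0), (q0, q1, qneg (qwp i)), (qneg (qwp i), q0, q1)]. i \<leftarrow> [0,1,2]]"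
definition "lnsF2 = concat [[(qmul qt (qwp k), q0, q1), (q0, qmul qt (qwp k), q1), (q1, qmul qt (qwp k), q0),
           (q1, q0, qmul qt (qwp k)), (q0, q1, qmul qt (qwp k)), (qmul qt (qwp k), q1, q0)]. k \<leftarrow> [0,1,2]]"
definition "lnsG1 = [(qmul qal (qwp i), qmul qbe (qwp j), qga). i \<leftarrow> [0,1,2], j \<leftarrow> [0,1,2]]"
definition "lnsG2 = [(qmul qbe (qwp j), qga, qmul qal (qwp i)). i \<leftarrow> [0,1,2], j \<leftarrow> [0,1,2]]"
definition "lnsG3 = [(qga, qmul qal (qwp i), qmul qbe (qwp j)). i \<leftarrow> [0,1,2], j \<leftarrow> [0,1,2]]"
definition "lnsG4 = [(qmul qbe (qwp j), qmul qal (qwp i), qga). i \<leftarrow> [0,1,2], j \<leftarrow> [0,1,2]]"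
definition "lnsG5 = [(qmul qal (qwp i), qga, qmul qbe (qwp j)). i \<leftarrow> [0,1,2], j \<leftarrow> [0,1,2]]"
definition "lnsG6 = [(qga, qmul qbe (qwp j), qmul qal (qwp i)). i \<leftarrow> [0,1,2], j \<leftarrow> [0,1,2]]"
definition lns :: "qv list" where "lns = lnsF1 @ lnsF2 @ lnsG1 @ lnsG2 @ lnsG3 @ lnsG4 @ lnsG5 @ lnsG6"

definition ptsL :: "qv list" where "ptsL = [((Q (1) (0) (0) (0) (0) (0)), (Q (1) (0) (0) (0) (0) (0)), (Q (0) (-1) (0) (0) (0) (0))), ((Q (1) (0) (0) (0) (0) (0)), (Q (1) (0) (0) (0) (0) (0)), (Q (0) (0) (0) (0) (-1) (0))), ((Q (1) (0) (0) (0) (0) (0)), (Q (1) (0) (0) (0) (0) (0)), (Q (0) (1) (0) (0) (1) (0))), ((Q (1) (0) (0) (0) (0) (0)), (Q (0) (0) (0) (1) (0) (0)), (Q (0) (-1) (0) (0) (0) (0))), ((Q (1) (0) (0) (0) (0) (0)), (Q (0) (0) (0) (1) (0) (0)), (Q (0) (0) (0) (0) (-1) (0))), ((Q (1) (0) (0) (0) (0) (0)), (Q (0) (0) (0) (1) (0) (0)), (Q (0) (1) (0) (0) (1) (0))), ((Q (1) (0) (0) (0) (0) (0)), (Q (-1) (0) (0) (-1) (0) (0)), (Q (0) (-1) (0) (0) (0) (0))), ((Q (1) (0) (0) (0) (0) (0)), (Q (-1) (0) (0) (-1) (0) (0)), (Q (0) (0) (0) (0) (-1) (0))), ((Q (1)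 (0) (0) (0) (0) (0)), (Q (-1) (0) (0) (-1) (0) (0)), (Q (0) (1) (0) (0) (1) (0))), ((Q (0) (-1) (0) (0) (0) (0)), (Q (1) (0) (0) (0) (0) (0)), (Q (1) (0) (0) (0) (0) (0))), ((Q (0) (0) (0) (0) (-1) (0)), (Q (1) (0) (0) (0) (0) (0)), (Q (1) (0) (0) (0) (0) (0))), ((Q (0) (1) (0) (0) (1) (0)), (Q (1) (0) (0) (0) (0) (0)), (Q (1) (0) (0) (0) (0) (0))), ((Q (0) (-1) (0) (0) (0) (0)), (Q (1) (0) (0) (0) (0) (0)), (Q (0) (0) (0) (1) (0) (0))), ((Q (0) (0) (0) (0) (-1) (0)), (Q (1) (0) (0) (0) (0) (0)), (Q (0) (0) (0) (1) (0) (0))), ((Q (0) (1) (0) (0) (1) (0)), (Q (1) (0) (0) (0) (0) (0)), (Q (0) (0) (0) (1) (0) (0))), ((Q (0) (-1) (0) (0) (0) (0)), (Q (1) (0) (0) (0) (0) (0)), (Q (-1) (0) (0) (-1) (0) (0))), ((Q (0) (0) (0) (0) (-1) (0)), (Q (1) (0) (0) (0) (0) (0)), (Q (-1) (0) (0) (-1) (0) (0))), ((Q (0) (1) (0) (0) (1) (0)), (Q (1) (0) (0) (0) (0) (0)), (Q (-1) (0) (0) (-1) (0) (0))), ((Q (1) (0) (0) (0) (0) (0)), (Q (0) (-1) (0) (0) (0) (0)), (Q (1) (0) (0) (0) (0) (0))), ((Q (1) (0) (0) (0) (0) (0)), (Q (0) (0) (0) (0) (-1) (0)), (Q (1) (0)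 (0) (0) (0) (0))), ((Q (1) (0) (0) (0) (0) (0)), (Q (0) (1) (0) (0) (1) (0)), (Q (1) (0) (0) (0) (0) (0))), ((Q (0) (0) (0) (1) (0) (0)), (Q (0) (-1) (0) (0) (0) (0)), (Q (1) (0) (0) (0) (0) (0))), ((Q (0) (0) (0) (1) (0) (0)), (Q (0) (0) (0) (0) (-1) (0)), (Q (1) (0) (0) (0) (0) (0))), ((Q (0) (0) (0) (1) (0) (0)), (Q (0) (1) (0) (0) (1) (0)), (Q (1) (0) (0) (0) (0) (0))), ((Q (-1) (0) (0) (-1) (0) (0)), (Q (0) (-1) (0) (0) (0) (0)), (Q (1) (0) (0) (0) (0) (0))), ((Q (-1) (0) (0) (-1) (0) (0)), (Q (0) (0) (0) (0) (-1) (0)), (Q (1) (0) (0) (0) (0) (0))), ((Q (-1) (0) (0) (-1) (0) (0)), (Q (0) (1) (0) (0) (1) (0)), (Q (1) (0) (0) (0) (0) (0)))]"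
definition lnsL :: "qv list" where "lnsL = [((Q (1) (0) (0) (0) (0) (0)), (Q (-1) (0) (0) (0) (0) (0)), (Q (0) (0) (0) (0) (0) (0))), ((Q (0) (0) (0) (0) (0) (0)), (Q (1) (0) (0) (0) (0) (0)), (Q (-1) (0) (0) (0) (0) (0))), ((Q (-1) (0) (0) (0) (0) (0)), (Q (0) (0) (0) (0) (0) (0)), (Q (1) (0) (0) (0) (0) (0))), ((Q (1) (0) (0) (0) (0) (0)), (Q (0) (0) (0) (-1) (0) (0)), (Q (0) (0) (0) (0) (0) (0))), ((Q (0) (0) (0) (0) (0) (0)), (Q (1) (0) (0) (0) (0) (0)), (Q (0) (0) (0) (-1) (0) (0))), ((Q (0) (0) (0) (-1) (0) (0)), (Q (0) (0) (0) (0) (0) (0)), (Q (1) (0) (0) (0) (0) (0))), ((Q (1) (0) (0) (0) (0) (0)), (Q (1) (0) (0) (1) (0) (0)), (Q (0) (0) (0) (0) (0) (0))), ((Q (0) (0) (0) (0) (0) (0)), (Q (1) (0) (0) (0) (0) (0)), (Q (1) (0) (0) (1) (0) (0))), ((Q (1) (0) (0) (1) (0) (0)), (Q (0) (0) (0) (0) (0) (0)), (Q (1) (0) (0) (0) (0) (0))), ((Q (0) (1) (0) (0) (0) (0)), (Q (0) (0) (0) (0) (0) (0)), (Q (1) (0) (0) (0) (0) (0))), ((Q (0) (0) (0) (0) (0) (0)), (Q (0) (1) (0) (0) (0) (0)), (Q (1) (0) (0) (0) (0) (0))), ((Q (1) (0) (0) (0) (0) (0)), (Q (0) (1) (0) (0)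 (0) (0)), (Q (0) (0) (0) (0) (0) (0))), ((Q (1) (0) (0) (0) (0) (0)), (Q (0) (0) (0) (0) (0) (0)), (Q (0) (1) (0) (0) (0) (0))), ((Q (0) (0) (0) (0) (0) (0)), (Q (1) (0) (0) (0) (0) (0)), (Q (0) (1) (0) (0) (0) (0))), ((Q (0) (1) (0) (0) (0) (0)), (Q (1) (0) (0) (0) (0) (0)), (Q (0) (0) (0) (0) (0) (0))), ((Q (0) (0) (0) (0) (1) (0)), (Q (0) (0) (0) (0) (0) (0)), (Q (1) (0) (0) (0) (0) (0))), ((Q (0) (0) (0) (0) (0) (0)), (Q (0) (0) (0) (0) (1) (0)), (Q (1) (0) (0) (0) (0) (0))), ((Q (1) (0) (0) (0) (0) (0)), (Q (0) (0) (0) (0) (1) (0)), (Q (0) (0) (0) (0) (0) (0))), ((Q (1) (0) (0) (0) (0) (0)), (Q (0) (0) (0) (0) (0) (0)), (Q (0) (0) (0) (0) (1) (0))), ((Q (0) (0) (0) (0) (0) (0)), (Q (1) (0) (0) (0) (0) (0)), (Q (0) (0) (0) (0) (1) (0))), ((Q (0) (0) (0) (0) (1) (0)), (Q (1) (0) (0) (0) (0) (0)), (Q (0) (0) (0) (0) (0) (0))), ((Q (0) (-1) (0) (0) (-1) (0)), (Q (0) (0) (0) (0) (0) (0)), (Q (1) (0) (0) (0) (0) (0))), ((Q (0) (0) (0) (0) (0) (0)), (Q (0) (-1) (0) (0) (-1) (0)), (Q (1) (0) (0) (0) (0) (0))), ((Q (1) (0) (0) (0) (0) (0)), (Q (0)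 (-1) (0) (0) (-1) (0)), (Q (0) (0) (0) (0) (0) (0))), ((Q (1) (0) (0) (0) (0) (0)), (Q (0) (0) (0) (0) (0) (0)), (Q (0) (-1) (0) (0) (-1) (0))), ((Q (0) (0) (0) (0) (0) (0)), (Q (1) (0) (0) (0) (0) (0)), (Q (0) (-1) (0) (0) (-1) (0))), ((Q (0) (-1) (0) (0) (-1) (0)), (Q (1) (0) (0) (0) (0) (0)), (Q (0) (0) (0) (0) (0) (0))), ((Q (1) (1) (0) (0) (0) (0)), (Q (-1) (0) (0) (0) (0) (1)), (Q (1) (0) (0) (0) (1) (0))), ((Q (1) (1) (0) (0) (0) (0)), (Q (0) (0) (-1) (-1) (0) (-1)), (Q (1) (0) (0) (0) (1) (0))), ((Q (1) (1) (0) (0) (0) (0)), (Q (1) (0) (1) (1) (0) (0)), (Q (1) (0) (0) (0) (1) (0))), ((Q (0) (0) (0) (1) (1) (0)), (Q (-1) (0) (0) (0) (0) (1)), (Q (1) (0) (0) (0) (1) (0))), ((Q (0) (0) (0) (1) (1) (0)), (Q (0) (0) (-1) (-1) (0) (-1)), (Q (1) (0) (0) (0) (1) (0))), ((Q (0) (0) (0) (1) (1) (0)), (Q (1) (0) (1) (1) (0) (0)), (Q (1) (0) (0) (0) (1) (0))), ((Q (-1) (-1) (0) (-1) (-1) (0)), (Q (-1) (0) (0) (0) (0) (1)), (Q (1) (0) (0) (0) (1) (0))), ((Q (-1) (-1) (0) (-1) (-1) (0)), (Q (0) (0) (-1) (-1) (0) (-1)), (Q (1) (0) (0) (0) (1)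 (0))), ((Q (-1) (-1) (0) (-1) (-1) (0)), (Q (1) (0) (1) (1) (0) (0)), (Q (1) (0) (0) (0) (1) (0))), ((Q (-1) (0) (0) (0) (0) (1)), (Q (1) (0) (0) (0) (1) (0)), (Q (1) (1) (0) (0) (0) (0))), ((Q (0) (0) (-1) (-1) (0) (-1)), (Q (1) (0) (0) (0) (1) (0)), (Q (1) (1) (0) (0) (0) (0))), ((Q (1) (0) (1) (1) (0) (0)), (Q (1) (0) (0) (0) (1) (0)), (Q (1) (1) (0) (0) (0) (0))), ((Q (-1) (0) (0) (0) (0) (1)), (Q (1) (0) (0) (0) (1) (0)), (Q (0) (0) (0) (1) (1) (0))), ((Q (0) (0) (-1) (-1) (0) (-1)), (Q (1) (0) (0) (0) (1) (0)), (Q (0) (0) (0) (1) (1) (0))), ((Q (1) (0) (1) (1) (0) (0)), (Q (1) (0) (0) (0) (1) (0)), (Q (0) (0) (0) (1) (1) (0))), ((Q (-1) (0) (0) (0) (0) (1)), (Q (1) (0) (0) (0) (1) (0)), (Q (-1) (-1) (0) (-1) (-1) (0))), ((Q (0) (0) (-1) (-1) (0) (-1)), (Q (1) (0) (0) (0) (1) (0)), (Q (-1) (-1) (0) (-1) (-1) (0))), ((Q (1) (0) (1) (1) (0) (0)), (Q (1) (0) (0) (0) (1) (0)), (Q (-1) (-1) (0) (-1) (-1) (0))), ((Q (1) (0) (0) (0) (1) (0)), (Q (1) (1) (0) (0) (0) (0)), (Q (-1) (0) (0) (0) (0) (1))), ((Q (1) (0) (0) (0) (1) (0)), (Q (1)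 (1) (0) (0) (0) (0)), (Q (0) (0) (-1) (-1) (0) (-1))), ((Q (1) (0) (0) (0) (1) (0)), (Q (1) (1) (0) (0) (0) (0)), (Q (1) (0) (1) (1) (0) (0))), ((Q (1) (0) (0) (0) (1) (0)), (Q (0) (0) (0) (1) (1) (0)), (Q (-1) (0) (0) (0) (0) (1))), ((Q (1) (0) (0) (0) (1) (0)), (Q (0) (0) (0) (1) (1) (0)), (Q (0) (0) (-1) (-1) (0) (-1))), ((Q (1) (0) (0) (0) (1) (0)), (Q (0) (0) (0) (1) (1) (0)), (Q (1) (0) (1) (1) (0) (0))), ((Q (1) (0) (0) (0) (1) (0)), (Q (-1) (-1) (0) (-1) (-1) (0)), (Q (-1) (0) (0) (0) (0) (1))), ((Q (1) (0) (0) (0) (1) (0)), (Q (-1) (-1) (0) (-1) (-1) (0)), (Q (0) (0) (-1) (-1) (0) (-1))), ((Q (1) (0) (0) (0) (1) (0)), (Q (-1) (-1) (0) (-1) (-1) (0)), (Q (1) (0) (1) (1) (0) (0))), ((Q (-1) (0) (0) (0) (0) (1)), (Q (1) (1) (0) (0) (0) (0)), (Q (1) (0) (0) (0) (1) (0))), ((Q (0) (0) (-1) (-1) (0) (-1)), (Q (1) (1) (0) (0) (0) (0)), (Q (1) (0) (0) (0) (1) (0))), ((Q (1) (0) (1) (1) (0) (0)), (Q (1) (1) (0) (0) (0) (0)), (Q (1) (0) (0) (0) (1) (0))), ((Q (-1) (0) (0) (0) (0) (1)), (Q (0) (0) (0) (1) (1) (0)), (Q (1) (0) (0) (0) (1)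 (0))), ((Q (0) (0) (-1) (-1) (0) (-1)), (Q (0) (0) (0) (1) (1) (0)), (Q (1) (0) (0) (0) (1) (0))), ((Q (1) (0) (1) (1) (0) (0)), (Q (0) (0) (0) (1) (1) (0)), (Q (1) (0) (0) (0) (1) (0))), ((Q (-1) (0) (0) (0) (0) (1)), (Q (-1) (-1) (0) (-1) (-1) (0)), (Q (1) (0) (0) (0) (1) (0))), ((Q (0) (0) (-1) (-1) (0) (-1)), (Q (-1) (-1) (0) (-1) (-1) (0)), (Q (1) (0) (0) (0) (1) (0))), ((Q (1) (0) (1) (1) (0) (0)), (Q (-1) (-1) (0) (-1) (-1) (0)), (Q (1) (0) (0) (0) (1) (0))), ((Q (1) (1) (0) (0) (0) (0)), (Q (1) (0) (0) (0) (1) (0)), (Q (-1) (0) (0) (0) (0) (1))), ((Q (1) (1) (0) (0) (0) (0)), (Q (1) (0) (0) (0) (1) (0)), (Q (0) (0) (-1) (-1) (0) (-1))), ((Q (1) (1) (0) (0) (0) (0)), (Q (1) (0) (0) (0) (1) (0)), (Q (1) (0) (1) (1) (0) (0))), ((Q (0) (0) (0) (1) (1) (0)), (Q (1) (0) (0) (0) (1) (0)), (Q (-1) (0) (0) (0) (0) (1))), ((Q (0) (0) (0) (1) (1) (0)), (Q (1) (0) (0) (0) (1) (0)), (Q (0) (0) (-1) (-1) (0) (-1))), ((Q (0) (0) (0) (1) (1) (0)), (Q (1) (0) (0) (0) (1) (0)), (Q (1) (0) (1) (1) (0) (0))), ((Q (-1) (-1) (0) (-1) (-1) (0)), (Q (1)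 (0) (0) (0) (1) (0)), (Q (-1) (0) (0) (0) (0) (1))), ((Q (-1) (-1) (0) (-1) (-1) (0)), (Q (1) (0) (0) (0) (1) (0)), (Q (0) (0) (-1) (-1) (0) (-1))), ((Q (-1) (-1) (0) (-1) (-1) (0)), (Q (1) (0) (0) (0) (1) (0)), (Q (1) (0) (1) (1) (0) (0))), ((Q (1) (0) (0) (0) (1) (0)), (Q (-1) (0) (0) (0) (0) (1)), (Q (1) (1) (0) (0) (0) (0))), ((Q (1) (0) (0) (0) (1) (0)), (Q (0) (0) (-1) (-1) (0) (-1)), (Q (1) (1) (0) (0) (0) (0))), ((Q (1) (0) (0) (0) (1) (0)), (Q (1) (0) (1) (1) (0) (0)), (Q (1) (1) (0) (0) (0) (0))), ((Q (1) (0) (0) (0) (1) (0)), (Q (-1) (0) (0) (0) (0) (1)), (Q (0) (0) (0) (1) (1) (0))), ((Q (1) (0) (0) (0) (1) (0)), (Q (0) (0) (-1) (-1) (0) (-1)), (Q (0) (0) (0) (1) (1) (0))), ((Q (1) (0) (0) (0) (1) (0)), (Q (1) (0) (1) (1) (0) (0)), (Q (0) (0) (0) (1) (1) (0))), ((Q (1) (0) (0) (0) (1) (0)), (Q (-1) (0) (0) (0) (0) (1)), (Q (-1) (-1) (0) (-1) (-1) (0))), ((Q (1) (0) (0) (0) (1) (0)), (Q (0) (0) (-1) (-1) (0) (-1)), (Q (-1) (-1) (0) (-1) (-1) (0))), ((Q (1) (0) (0) (0) (1) (0)), (Q (1) (0) (1) (1) (0) (0)), (Q (-1) (-1) (0)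 (-1) (-1) (0)))]"
definition HPL :: "(int\<times>int\<times>int) list" where "HPL = [(1, 1, 27), (1, 1, 11), (1, 1, 24), (1, 5, 27), (1, 5, 11), (1, 5, 24), (1, 25, 27), (1, 25, 11), (1, 25, 24), (27, 1, 1), (11, 1, 1), (24, 1, 1), (27, 1, 5), (11, 1, 5), (24, 1, 5), (27, 1, 25), (11, 1, 25), (24, 1, 25), (1, 27, 1), (1, 11, 1), (1, 24, 1), (5, 27, 1), (5, 11, 1), (5, 24, 1), (25, 27, 1), (25, 11, 1), (25, 24, 1)]"
definition HLL :: "(int\<times>int\<times>int) list" where "HLL = [(1, 30, 0), (0, 1, 30), (30, 0, 1), (1, 26, 0), (0, 1, 26), (26, 0, 1), (1, 6, 0), (0, 1, 6), (6, 0, 1), (4, 0, 1), (0, 4, 1), (1, 4, 0), (1, 0, 4), (0, 1, 4), (4, 1, 0), (20, 0, 1), (0, 20, 1), (1, 20, 0), (1, 0, 20), (0, 1, 20), (20, 1, 0), (7, 0, 1), (0, 7, 1), (1, 7, 0), (1, 0, 7), (0, 1, 7), (7, 1, 0), (5, 17, 21), (5, 23, 21), (5, 22, 21), (25, 17, 21), (25, 23, 21), (25, 22, 21), (1, 17, 21), (1, 23, 21), (1, 22, 21), (17, 21, 5), (23, 21, 5), (22, 21, 5), (17, 21, 25), (23, 21, 25), (22, 21, 25), (17, 21, 1), (23, 21, 1), (22, 21, 1), (21, 5, 17), (21, 5, 23), (21, 5, 22), (21, 25, 17), (21, 25, 23), (21, 25, 22), (21, 1, 17), (21, 1, 23), (21,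 1, 22), (17, 5, 21), (23, 5, 21), (22, 5, 21), (17, 25, 21), (23, 25, 21), (22, 25, 21), (17, 1, 21), (23, 1, 21), (22, 1, 21), (5, 21, 17), (5, 21, 23), (5, 21, 22), (25, 21, 17), (25, 21, 23), (25, 21, 22), (1, 21, 17), (1, 21, 23), (1, 21, 22), (21, 17, 5), (21, 23, 5), (21, 22, 5), (21, 17, 25), (21, 23, 25), (21, 22, 25), (21, 17, 1), (21, 23, 1), (21, 22, 1)]"
definition tri :: "(nat\<times>nat\<times>nat) list" where "tri = [(0, 1, 2), (9, 10, 11), (18, 19, 20), (6, 7, 8), (15, 16, 17), (24, 25, 26), (3, 4, 5), (12, 13, 14), (21, 22, 23), (0, 3, 6), (0, 4, 8), (9, 12, 15), (9, 13, 17), (18, 21, 24), (18, 22, 26), (1, 4, 7), (1, 5, 6), (10, 13, 16), (10, 14, 15), (19, 22, 25), (19, 23, 24), (2, 5, 8), (2, 3, 7), (11, 14, 17), (11, 12, 16), (20, 23, 26), (20, 21, 25), (0, 10, 20), (6, 14, 19), (3, 15, 18), (4, 9, 26), (1, 13, 25), (7, 17, 24), (8, 11, 23), (5, 12, 22), (2, 16, 21), (1, 11, 18), (5, 10, 24), (6, 9, 21), (0, 17, 22), (4, 16, 19), (8, 15, 25), (2, 14, 26), (3, 13, 23), (7, 12, 20), (2, 9, 19), (1, 15, 23), (0, 12, 24), (8, 13, 18), (7, 10, 22), (6, 16, 26), (5, 17, 20), (4, 14, 21), (3, 11, 25), (0, 11, 19), (4, 10, 25), (8, 9, 22), (6, 12,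 18), (1, 14, 24), (5, 13, 21), (3, 16, 20), (7, 15, 26), (2, 17, 23), (2, 10, 18), (1, 16, 22), (0, 13, 26), (3, 9, 24), (5, 15, 19), (4, 12, 23), (7, 11, 21), (6, 17, 25), (8, 14, 20), (1, 9, 20), (7, 13, 19), (4, 17, 18), (0, 15, 21), (6, 10, 23), (3, 14, 22), (2, 12, 25), (8, 16, 24), (5, 11, 26)]"

lemma ptsL: "pts = ptsL" by code_simp
lemma lnsL: "lns = lnsL" by code_simp
lemma HPL: "map hmv ptsL = HPL" by code_simp
lemma HLL: "map hmv lnsL = HLL" by code_simp

lemma chkE1: "length lnsL = 81 \<and> length ptsL = 27 \<and> length tri = 81 \<and>
  (\<forall>m<81. case tri!m of (i,j,k) \<Rightarrow> i < 27 \<and> j < 27 \<and> k < 27 \<and>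
     qdot (lnsL!m) (ptsL!i) = q0 \<and> qdot (lnsL!m) (ptsL!j) = q0 \<and> qdot (lnsL!m) (ptsL!k) = q0)"
  by code_simp
lemma chkE2: "\<forall>m<81. \<forall>k<27. (case tri!m of (i,j,l) \<Rightarrow> k \<noteq> i \<and> k \<noteq> j \<and> k \<noteq> l) \<longrightarrow> fdot (HLL!m) (HPL!k) \<noteq> 0"
  by code_simp
lemma chkE4: "distinct tri" by code_simp

definition "allpairs = [(i,j). i \<leftarrow> [0..<27], j \<leftarrow> [Suc i..<27]]"
definition "crs = map (\<lambda>(i,j). (i,j,fcross (HPL!i) (HPL!j))) allpairs"
lemma chkE5: "list_all (\<lambda>(i,j,c). c \<noteq> (0,0,0)) crs"
  by code_simp
lemma chkE3: "set (concat (map (\<lambda>(i,j,c). map (\<lambda>k. (i,j,k)) (filter (\<lambda>k. fdot c (HPL!k) = 0) [Suc j..<27])) crs)) = set tri"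
  by code_simp

definition PsiE :: "'a::comm_ring_1 \<Rightarrow> 'a \<Rightarrow> 'a \<Rightarrow> 'a \<Rightarrow> 'a" where
 "PsiE u v z m = (let S = u+v+z; A = S^3 + 27*m^3; B = 9*S^2*m; C = 27*S*m^2;
    s1 = 2*z - u - v; s2 = u^2+v^2+z^2-u*v-v*z-z*u; p = -2*(s1^3 - 3*s2*s1); r = 4*s2^3;
    H0 = A^2 + 2*B*C + p*A + r; H1 = 2*A*B + C^2 + p*B; H2 = 2*A*C + B^2 + p*C
    in H0^3 + H1^3 + H2^3 - 3*H0*H1*H2)"

context
  fixes w :: "'a::comm_ring_1"
  assumes w2: "w^2 + w + 1 = 0"
begin

lemma w3: "w^3 = 1"
proof -
  have "w^3 - 1 = (w - 1) * (w^2 + w + 1)" by (simp add: algebra_simps power2_eq_square power3_eq_cube)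
  thus ?thesis using w2 by simp
qed

lemma cube_fac: "(x + y) * (x + w*y) * (x + w^2*y) = x^3 + y^3"
proof -
  have "(x + y) * (x + w*y) * (x + w^2*y) = x^3 + y^3 + (w^2+w+1)*(x^2*y + x*y^2 + (w-1)*(x*y^2+y^3))"
    by (simp add: algebra_simps power2_eq_square power3_eq_cube)
  thus ?thesis using w2 by simp
qed

lemma cube_fac': "(x - y) * (x - w*y) * (x - w^2*y) = x^3 - y^3"
  using cube_fac[of x "-y"] by (simp add: power3_eq_cube)

lemma Lc: "(A+B+C)*(A+B*w+C*w^2)*(A+B*w^2+C*w) = A^3+B^3+C^3-3*A*B*C"
proof -
  have "(A+B+C)*(A+B*w+C*w^2)*(A+B*w^2+C*w) = A^3+B^3+C^3-3*A*B*C + (w^2+w+1)*(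
   0 - C^3 + C^3*w + B*C^2*w^2 + B^2*C*w^2 - B^3 + B^3*w + A*C^2*w + 3*A*B*C - A*B*C*w + A*B*C*w^2 + A*B^2*w + A^2*C + A^2*B)"
    by (simp add: algebra_simps power2_eq_square power3_eq_cube)
  thus ?thesis using w2 by simp
qed

lemma cube_w1: "(s + w*r)^3 + q = (s^3+r^3+q) + 3*s^2*r*w + 3*s*r^2*w^2"
proof -
  have "(s + w*r)^3 + q = (s^3+r^3+q) + 3*s^2*r*w + 3*s*r^2*w^2 + (w^3 - 1)*r^3"
    by (simp add: algebra_simps power2_eq_square power3_eq_cube)
  thus ?thesis using w3 by simp
qed
lemma cube_w2: "(s + w^2*r)^3 + q = (s^3+r^3+q) + 3*s^2*r*w^2 + 3*s*r^2*w"
proof -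
  have "(s + w^2*r)^3 + q = (s^3+r^3+q) + 3*s^2*r*w^2 + 3*s*r^2*w + (w^3 - 1)*(3*s*r^2*w + (w^3+1)*r^3)"
    by (simp add: algebra_simps power2_eq_square power3_eq_cube)
  thus ?thesis using w3 by simp
qed

lemma N3: "prod_list (map (\<lambda>i. prod_list (map (\<lambda>j. a * w^i * A + b * w^j * B + c * C) [0,1,2])) [0,1,2])
   = (a^3*A^3 + b^3*B^3 + c^3*C^3)^3 - 27 * a^3*b^3*c^3*A^3*B^3*C^3"
proof -
  define s where "s = c*C"
  define r where "r = a*A"
  define y where "y = b*B"
  have inner: "prod_list (map (\<lambda>j. a * w^i * A + b * w^j * B + c * C) [0,1,2]) = (s + w^i*r)^3 + y^3" for i :: nat
  proof -
    have "prod_list (map (\<lambda>j. a * w^i * A + b * w^j * B + c * C) [0,1,2])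
       = ((s + w^i*r) + y) * ((s + w^i*r) + w*y) * ((s + w^i*r) + w^2*y)"
      by (simp add: s_def r_def y_def algebra_simps numeral_2_eq_2)
    thus ?thesis using cube_fac by simp
  qed
  have "prod_list (map (\<lambda>i. prod_list (map (\<lambda>j. a * w^i * A + b * w^j * B + c * C) [0,1,2])) [0,1,2])
     = ((s + r)^3 + y^3) * ((s + w*r)^3 + y^3) * ((s + w^2*r)^3 + y^3)"
    unfolding inner by (simp add: mult.assoc)
  also have "\<dots> = ((s^3+r^3+y^3) + 3*s^2*r + 3*s*r^2) * ((s^3+r^3+y^3) + 3*s^2*r*w + 3*s*r^2*w^2)
     * ((s^3+r^3+y^3) + 3*s^2*r*w^2 + 3*s*r^2*w)"
    unfolding cube_w1 cube_w2 by (simp add: algebra_simps power2_eq_square power3_eq_cube)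
  also have "\<dots> = (s^3+r^3+y^3)^3 + (3*s^2*r)^3 + (3*s*r^2)^3 - 3*(s^3+r^3+y^3)*(3*s^2*r)*(3*s*r^2)"
    by (rule Lc)
  also have "\<dots> = (a^3*A^3 + b^3*B^3 + c^3*C^3)^3 - 27 * a^3*b^3*c^3*A^3*B^3*C^3"
    unfolding s_def r_def y_def by (simp add: algebra_simps power2_eq_square power3_eq_cube)
  finally show ?thesis .
qed


lemma E_split: "(x - S)^3 - 27*m^3 = (x - (S + 3*m)) * (x - (S + w*(3*m))) * (x - (S + w^2*(3*m)))"
proof -
  have "(x - S)^3 - (3*m)^3 = ((x-S) - 3*m) * ((x-S) - w*(3*m)) * ((x-S) - w^2*(3*m))"
    using cube_fac'[of "x-S" "3*m"] by simp
  thus ?thesis by (simp add: algebra_simps power3_eq_cube)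
qed

lemma T_split: assumes t3: "t^3 = 2"
  shows "(t*L - T) * (t*w*L - T) * (t*w^2*L - T) = 2*L^3 - T^3"
proof -
  have "(T - t*L) * (T - w*(t*L)) * (T - w^2*(t*L)) = T^3 - (t*L)^3" by (rule cube_fac')
  hence "(t*L - T) * (t*w*L - T) * (t*w^2*L - T) = (t*L)^3 - T^3"
    by (simp add: algebra_simps power3_eq_cube)
  also have "(t*L)^3 = 2*L^3" using t3 by (simp add: power_mult_distrib)
  finally show ?thesis .
qed

lemma Y_form: fixes oo :: 'a assumes o3: "oo^3 = 1"
  shows "(S + oo*(3*m))^3 = (S^3 + 27*m^3) + (9*S^2*m)*oo + (27*S*m^2)*oo^2"
proof -
  have "(S + oo*(3*m))^3 = (S^3 + 27*m^3) + (9*S^2*m)*oo + (27*S*m^2)*oo^2 + (oo^3 - 1)*(27*m^3)"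
    by (simp add: algebra_simps power2_eq_square power3_eq_cube)
  thus ?thesis using o3 by simp
qed

lemma H_form: fixes oo :: 'a assumes o3: "oo^3 = 1"
  shows "(A + B*oo + C*oo^2)^2 + p*(A + B*oo + C*oo^2) + r =
     (A^2 + 2*B*C + p*A + r) + (2*A*B + C^2 + p*B)*oo + (2*A*C + B^2 + p*C)*oo^2"
proof -
  have "(A + B*oo + C*oo^2)^2 + p*(A + B*oo + C*oo^2) + r =
     (A^2 + 2*B*C + p*A + r) + (2*A*B + C^2 + p*B)*oo + (2*A*C + B^2 + p*C)*oo^2 + (oo^3 - 1)*(2*B*C + C^2*oo)"
    by (simp add: algebra_simps power2_eq_square power3_eq_cube)
  thus ?thesis using o3 by simp
qed

lemma G_form: fixes Y :: 'a shows "(2*L1^3 - Y) * (2*L2^3 - Y) = Y^2 + (-2*(L1^3+L2^3))*Y + 4*(L1*L2)^3"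
  by (simp add: algebra_simps power2_eq_square power3_eq_cube)

lemma L12_sum: "(w*u + w^2*v + z) + (w^2*u + w*v + z) = 2*z - u - v"
proof -
  have "(w*u + w^2*v + z) + (w^2*u + w*v + z) = 2*z - u - v + (w^2+w+1)*(u+v)"
    by (simp add: algebra_simps)
  thus ?thesis using w2 by simp
qed
lemma L12_prod: "(w*u + w^2*v + z) * (w^2*u + w*v + z) = u^2+v^2+z^2-u*v-v*z-z*u"
proof -
  have "(w*u + w^2*v + z) * (w^2*u + w*v + z) = u^2+v^2+z^2-u*v-v*z-z*u + (w^3 - 1)*(u^2 + v^2 + w*u*v) + (w^2+w+1)*(u*v + u*z + v*z)"
    by (simp add: algebra_simps power2_eq_square power3_eq_cube)
  thus ?thesis using w2 w3 by simp
qed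


lemma Eprod: assumes t3: "t^3 = 2"
 shows "(((t*w-1)*u + (t*w^2-1)*v + (t-1)*z)^3 - 27*m^3) * (((t*w-1)*z + (t*w^2-1)*u + (t-1)*v)^3 - 27*m^3)
  * (((t*w-1)*v + (t*w^2-1)*z + (t-1)*u)^3 - 27*m^3) * (((t*w-1)*v + (t*w^2-1)*u + (t-1)*z)^3 - 27*m^3)
  * (((t*w-1)*u + (t*w^2-1)*z + (t-1)*v)^3 - 27*m^3) * (((t*w-1)*z + (t*w^2-1)*v + (t-1)*u)^3 - 27*m^3)
  = PsiE u v z m"
proof -
  define L1 where "L1 = w*u + w^2*v + z"
  define L2 where "L2 = w^2*u + w*v + z"
  define S where "S = u+v+z"
  have e1: "(t*w-1)*u + (t*w^2-1)*v + (t-1)*z = t*L1 - S"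
    by (simp add: L1_def S_def algebra_simps)
  have e2: "(t*w-1)*z + (t*w^2-1)*u + (t-1)*v = t*w*L1 - S"
  proof -
    have "(t*w-1)*z + (t*w^2-1)*u + (t-1)*v = t*w*L1 - S + (w^3-1)*(-(t*v))"
      by (simp add: L1_def S_def algebra_simps power2_eq_square power3_eq_cube)
    thus ?thesis using w3 by simp
  qed
  have e3: "(t*w-1)*v + (t*w^2-1)*z + (t-1)*u = t*w^2*L1 - S"
  proof -
    have "(t*w-1)*v + (t*w^2-1)*z + (t-1)*u = t*w^2*L1 - S + (w^3-1)*(-(t*u) - t*w*v)"
      by (simp add: L1_def S_def algebra_simps power2_eq_square power3_eq_cube)
    thus ?thesis using w3 by simp
  qed
  have e4: "(t*w-1)*v + (t*w^2-1)*u + (t-1)*z = t*L2 - S"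
    by (simp add: L2_def S_def algebra_simps)
  have e5: "(t*w-1)*u + (t*w^2-1)*z + (t-1)*v = t*w^2*L2 - S"
  proof -
    have "(t*w-1)*u + (t*w^2-1)*z + (t-1)*v = t*w^2*L2 - S + (w^3-1)*(-(t*w*u) - t*v)"
      by (simp add: L2_def S_def algebra_simps power2_eq_square power3_eq_cube)
    thus ?thesis using w3 by simp
  qed
  have e6: "(t*w-1)*z + (t*w^2-1)*v + (t-1)*u = t*w*L2 - S"
  proof -
    have "(t*w-1)*z + (t*w^2-1)*v + (t-1)*u = t*w*L2 - S + (w^3-1)*(-(t*u))"
      by (simp add: L2_def S_def algebra_simps power2_eq_square power3_eq_cube)
    thus ?thesis using w3 by simp
  qed
  define T0 where "T0 = S + 3*m"
  define T1 where "T1 = S + w*(3*m)"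
  define T2 where "T2 = S + w^2*(3*m)"
  have sp: "(x - S)^3 - 27*m^3 = (x - T0) * (x - T1) * (x - T2)" for x
    unfolding T0_def T1_def T2_def by (rule E_split)
  have "(((t*w-1)*u + (t*w^2-1)*v + (t-1)*z)^3 - 27*m^3) * (((t*w-1)*z + (t*w^2-1)*u + (t-1)*v)^3 - 27*m^3)
  * (((t*w-1)*v + (t*w^2-1)*z + (t-1)*u)^3 - 27*m^3) * (((t*w-1)*v + (t*w^2-1)*u + (t-1)*z)^3 - 27*m^3)
  * (((t*w-1)*u + (t*w^2-1)*z + (t-1)*v)^3 - 27*m^3) * (((t*w-1)*z + (t*w^2-1)*v + (t-1)*u)^3 - 27*m^3)
   = ((t*L1 - T0) * (t*L1 - T1) * (t*L1 - T2)) * ((t*w*L1 - T0) * (t*w*L1 - T1) * (t*w*L1 - T2))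
   * ((t*w^2*L1 - T0) * (t*w^2*L1 - T1) * (t*w^2*L1 - T2)) * ((t*L2 - T0) * (t*L2 - T1) * (t*L2 - T2))
   * ((t*w^2*L2 - T0) * (t*w^2*L2 - T1) * (t*w^2*L2 - T2)) * ((t*w*L2 - T0) * (t*w*L2 - T1) * (t*w*L2 - T2))" (is "?LHS = _")
    unfolding e1 e2 e3 e4 e5 e6 sp ..
  also have "\<dots> = ((t*L1 - T0) * (t*w*L1 - T0) * (t*w^2*L1 - T0)) * ((t*L2 - T0) * (t*w*L2 - T0) * (t*w^2*L2 - T0))
     * (((t*L1 - T1) * (t*w*L1 - T1) * (t*w^2*L1 - T1)) * ((t*L2 - T1) * (t*w*L2 - T1) * (t*w^2*L2 - T1)))
     * (((t*L1 - T2) * (t*w*L1 - T2) * (t*w^2*L1 - T2)) * ((t*L2 - T2) * (t*w*L2 - T2) * (t*w^2*L2 - T2)))"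
    by (simp only: mult_ac)
  also have "\<dots> = ((2*L1^3 - T0^3) * (2*L2^3 - T0^3)) * ((2*L1^3 - T1^3) * (2*L2^3 - T1^3)) * ((2*L1^3 - T2^3) * (2*L2^3 - T2^3))"
    unfolding T_split[OF t3] ..
  finally have step1: "?LHS = ((2*L1^3 - T0^3) * (2*L2^3 - T0^3)) * ((2*L1^3 - T1^3) * (2*L2^3 - T1^3)) * ((2*L1^3 - T2^3) * (2*L2^3 - T2^3))" .
  define A where "A = S^3 + 27*m^3"
  define B where "B = 9*S^2*m"
  define C where "C = 27*S*m^2"
  define p where "p = -2*(L1^3+L2^3)"
  define r where "r = 4*(L1*L2)^3"
  define H0 where "H0 = A^2 + 2*B*C + p*A + r"
  define H1 where "H1 = 2*A*B + C^2 + p*B"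
  define H2 where "H2 = 2*A*C + B^2 + p*C"
  have Hf: "(2*L1^3 - (S + oo*(3*m))^3) * (2*L2^3 - (S + oo*(3*m))^3) = H0 + H1*oo + H2*oo^2" if "oo^3 = 1" for oo
  proof -
    have "(2*L1^3 - (S + oo*(3*m))^3) * (2*L2^3 - (S + oo*(3*m))^3)
        = (A + B*oo + C*oo^2)^2 + p*(A + B*oo + C*oo^2) + r"
      unfolding G_form Y_form[OF that] A_def B_def C_def p_def r_def by simp
    also have "\<dots> = H0 + H1*oo + H2*oo^2" unfolding H_form[OF that] H0_def H1_def H2_def ..
    finally show ?thesis .
  qed
  have h0: "(2*L1^3 - T0^3) * (2*L2^3 - T0^3) = H0 + H1 + H2" using Hf[of 1] by (simp add: T0_def)
  have h1: "(2*L1^3 - T1^3) * (2*L2^3 - T1^3) = H0 + H1*w + H2*w^2" using Hf[of w] w3 by (simp add: T1_def)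
  have ww4: "(w^2)^2 = w" using w3 by (metis power2_eq_square power3_eq_cube mult.assoc mult_1_right power_mult_distrib mult.commute power2_eq_square)
  have w23: "(w^2)^3 = 1" using w3 by (metis power_mult mult.commute power_one)
  have h2: "(2*L1^3 - T2^3) * (2*L2^3 - T2^3) = H0 + H1*w^2 + H2*w" using Hf[OF w23] ww4 by (simp add: T2_def)
  have "PsiE u v z m = H0^3 + H1^3 + H2^3 - 3*H0*H1*H2"
  proof -
    have s1: "L1 + L2 = 2*z - u - v" unfolding L1_def L2_def by (rule L12_sum)
    have s2: "L1 * L2 = u^2+v^2+z^2-u*v-v*z-z*u" unfolding L1_def L2_def by (rule L12_prod)
    have "L1^3 + L2^3 = (L1+L2)^3 - 3*(L1*L2)*(L1+L2)" by (simp add: algebra_simps power2_eq_square power3_eq_cube)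
    hence pp: "p = -2*((2*z - u - v)^3 - 3*(u^2+v^2+z^2-u*v-v*z-z*u)*(2*z - u - v))" unfolding p_def s1 s2 by simp
    have rr: "r = 4*(u^2+v^2+z^2-u*v-v*z-z*u)^3" unfolding r_def s2 ..
    show ?thesis unfolding PsiE_def Let_def H0_def H1_def H2_def pp rr A_def B_def C_def S_def ..
  qed
  with step1 h0 h1 h2 Lc[of H0 H1 H2] show ?thesis by (simp add: mult.assoc)
qed

end

lemma pconst_mult: "pconst (a*b) = pconst a * pconst b"
  unfolding pconst_def by (simp add: mult_single)
lemma pconst_add: "pconst (a+b) = pconst a + pconst b"
  unfolding pconst_def by (simp add: single_add)
lemma pconst_neg: "pconst (-a) = - pconst a"
  unfolding pconst_def by (simp add: single_uminus)
lemma pconst_diff: "pconst (a-b) = pconst a - pconst b"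
  unfolding pconst_def by (simp add: single_diff)
lemma pconst_1: "pconst 1 = 1" unfolding pconst_def by simp
lemma pconst_0: "pconst 0 = 0" unfolding pconst_def by simp
lemma pconst_numeral: "pconst (numeral n) = numeral n" unfolding pconst_def by simp
lemma pconst_pow: "pconst (a^n) = pconst a ^ n"
  by (induction n) (simp_all add: pconst_1 pconst_mult)

lemma Sum_any_Ints: "(\<And>a. g a \<in> \<int>) \<Longrightarrow> Sum_any g \<in> \<int>"
  by (simp add: Sum_any.expand_set Ints_sum)

lemma intp_add: "integral_poly p \<Longrightarrow> integral_poly q \<Longrightarrow> integral_poly (p + q)"
  unfolding integral_poly_def by (simp add: lookup_add)
lemma intp_neg: "integral_poly p \<Longrightarrow> integral_poly (- p)"
  unfolding integral_poly_def by simp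
lemma intp_diff: "integral_poly p \<Longrightarrow> integral_poly q \<Longrightarrow> integral_poly (p - q)"
  unfolding integral_poly_def by (simp add: lookup_minus)
lemma intp_mult: "integral_poly p \<Longrightarrow> integral_poly q \<Longrightarrow> integral_poly (p * q)"
  unfolding integral_poly_def lookup_mult
  by (intro allI Sum_any_Ints Ints_mult) (auto simp: when_def)
lemma intp_numeral: "integral_poly (numeral n)"
  unfolding integral_poly_def by (simp add: lookup_numeral when_def)
lemma intp_1: "integral_poly 1"
  unfolding integral_poly_def by (simp add: lookup_one when_def)
lemma intp_pvar: "integral_poly (pvar i)"
  unfolding integral_poly_def pvar_def by (simp add: lookup_single when_def)
lemma intp_pow: "integral_poly p \<Longrightarrow> integral_poly (p ^ n)"
  by (induction n) (simp_all add: intp_1 intp_mult)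
lemma intp_PsiE: "integral_poly u \<Longrightarrow> integral_poly v \<Longrightarrow> integral_poly z \<Longrightarrow> integral_poly m \<Longrightarrow>
   integral_poly (PsiE u v z m)"
  unfolding PsiE_def Let_def
  by (intro intp_add intp_neg intp_diff intp_mult intp_numeral intp_pow intp_1 | assumption)+

fun cdot :: "vec3 \<Rightarrow> vec3 \<Rightarrow> complex" where
  "cdot (a,b,c) (d,e,f) = a*d + b*e + c*f"
fun ccross :: "vec3 \<Rightarrow> vec3 \<Rightarrow> vec3" where
  "ccross (a,b,c) (d,e,f) = (b*f - c*e, c*d - a*f, a*e - b*d)"
fun smul :: "complex \<Rightarrow> vec3 \<Rightarrow> vec3" where
  "smul t (a,b,c) = (t*a, t*b, t*c)"
fun evv :: "qv \<Rightarrow> vec3" where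
  "evv (a,b,c) = (ev a, ev b, ev c)"

lemma mem_line: "v \<in> line_of a \<longleftrightarrow> nonzero3 v \<and> cdot a v = 0"
  by (cases a; cases v) (simp add: line_of_def)

lemma ev_dot: "cdot (evv p) (evv q) = ev (qdot p q)"
  by (cases p; cases q) (simp add: ev_add ev_mul del: ev.simps)
lemma ev_cross: "ccross (evv p) (evv q) = evv (qcross p q)"
  by (cases p; cases q) (simp add: ev_sub ev_mul del: ev.simps)

lemma hm_q0: "hm q0 = 0" by (simp add: hm_def q0_def)
lemma ev0_hm: "ev x = 0 \<Longrightarrow> hm x = 0"
  by (metis ev_nz hm_q0)

lemma fdot_nz: "fdot (hmv p) (hmv q) \<noteq> 0 \<Longrightarrow> cdot (evv p) (evv q) \<noteq> 0"
  using ev0_hm hm_dot ev_dot by metis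

lemma fcross_nz: assumes "fcross (hmv p) (hmv q) \<noteq> (0,0,0)" shows "ccross (evv p) (evv q) \<noteq> (0,0,0)"
proof
  assume "ccross (evv p) (evv q) = (0,0,0)"
  hence "evv (qcross p q) = (0,0,0)" by (simp add: ev_cross)
  then obtain a b c where abc: "qcross p q = (a,b,c)" "ev a = 0" "ev b = 0" "ev c = 0"
    by (cases "qcross p q") auto
  hence "hmv (qcross p q) = (0,0,0)" using ev0_hm by simp
  thus False using assms hm_cross by simp
qed

lemma linalg:
  assumes "cdot a u = 0" "cdot a v = 0" "ccross u v \<noteq> (0,0,0)"
  shows "\<exists>l. a = smul l (ccross u v)"
proof -
  obtain a1 a2 a3 where a: "a = (a1,a2,a3)" by (cases a) auto
  obtain u1 u2 u3 where u: "u = (u1,u2,u3)" by (cases u) auto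
  obtain v1 v2 v3 where v: "v = (v1,v2,v3)" by (cases v) auto
  define n1 where "n1 = u2*v3 - u3*v2"
  define n2 where "n2 = u3*v1 - u1*v3"
  define n3 where "n3 = u1*v2 - u2*v1"
  have du: "a1*u1 + a2*u2 + a3*u3 = 0" and dv: "a1*v1 + a2*v2 + a3*v3 = 0" using assms(1,2) a u v by simp_all
  have nz: "n1 \<noteq> 0 \<or> n2 \<noteq> 0 \<or> n3 \<noteq> 0" using assms(3) a u v by (auto simp: n1_def n2_def n3_def)
  have c1: "a2*n3 - a3*n2 = u1*(a1*v1 + a2*v2 + a3*v3) - v1*(a1*u1 + a2*u2 + a3*u3)"
    by (simp add: n2_def n3_def algebra_simps)
  have c2: "a3*n1 - a1*n3 = u2*(a1*v1 + a2*v2 + a3*v3) - v2*(a1*u1 + a2*u2 + a3*u3)"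
    by (simp add: n1_def n3_def algebra_simps)
  have c3: "a1*n2 - a2*n1 = u3*(a1*v1 + a2*v2 + a3*v3) - v3*(a1*u1 + a2*u2 + a3*u3)"
    by (simp add: n1_def n2_def algebra_simps)
  have e1: "a2*n3 = a3*n2" and e2: "a3*n1 = a1*n3" and e3: "a1*n2 = a2*n1"
    using c1 c2 c3 du dv by simp_all
  have "\<exists>l. a1 = l*n1 \<and> a2 = l*n2 \<and> a3 = l*n3"
  proof (cases "n1 \<noteq> 0")
    case True
    show ?thesis by (rule exI[of _ "a1/n1"]) (use True e2 e3 in \<open>auto simp: field_simps\<close>)
  next
    case F1: False
    show ?thesis
    proof (cases "n2 \<noteq> 0")
      case True
      show ?thesis by (rule exI[of _ "a2/n2"]) (use True e1 e3 in \<open>auto simp: field_simps\<close>)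
    next
      case False
      with F1 nz have n3: "n3 \<noteq> 0" by simp
      show ?thesis by (rule exI[of _ "a3/n3"]) (use n3 e1 e2 in \<open>auto simp: field_simps\<close>)
    qed
  qed
  thus ?thesis using a u v by (auto simp: n1_def n2_def n3_def)
qed

lemma two_points:
  assumes "nonzero3 b"
  shows "\<exists>p q c. p \<in> line_of b \<and> q \<in> line_of b \<and> c \<noteq> 0 \<and> ccross p q = smul c b"
proof -
  obtain b1 b2 b3 where b: "b = (b1,b2,b3)" by (cases b) auto
  have "b1 \<noteq> 0 \<or> b2 \<noteq> 0 \<or> b3 \<noteq> 0" using assms b by (auto simp: nonzero3_def)
  moreover
  { assume h: "b1 \<noteq> 0"
    have ?thesis
      by (rule exI[of _ "(b2,-b1,0)"], rule exI[of _ "(b3,0,-b1)"], rule exI[of _ b1])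
        (use h in \<open>auto simp: b mem_line nonzero3_def algebra_simps power2_eq_square\<close>) }
  moreover
  { assume h: "b2 \<noteq> 0"
    have ?thesis
      by (rule exI[of _ "(b2,-b1,0)"], rule exI[of _ "(0,b3,-b2)"], rule exI[of _ b2])
        (use h in \<open>auto simp: b mem_line nonzero3_def algebra_simps\<close>) }
  moreover
  { assume h: "b3 \<noteq> 0"
    have ?thesis
      by (rule exI[of _ "(b3,0,-b1)"], rule exI[of _ "(0,b3,-b2)"], rule exI[of _ b3])
        (use h in \<open>auto simp: b mem_line nonzero3_def algebra_simps\<close>) }
  ultimately show ?thesis by blast
qed

lemma smul_smul: "smul a (smul b v) = smul (a*b) v"
  by (cases v) simp
lemma smul_nz: "nonzero3 (smul t v) \<Longrightarrow> t \<noteq> 0"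
  by (cases v) (auto simp: nonzero3_def)
lemma smul_nz2: "t \<noteq> 0 \<Longrightarrow> nonzero3 v \<Longrightarrow> nonzero3 (smul t v)"
  by (cases v) (auto simp: nonzero3_def)

lemma line_eq_prop:
  assumes "nonzero3 a" "nonzero3 b" "line_of a = line_of b"
  shows "\<exists>t. t \<noteq> 0 \<and> a = smul t b"
proof -
  obtain p q c where pq: "p \<in> line_of b" "q \<in> line_of b" "c \<noteq> 0" "ccross p q = smul c b"
    using two_points[OF assms(2)] by blast
  have "cdot a p = 0" "cdot a q = 0" using pq assms(3) by (auto simp: mem_line)
  moreover have "ccross p q \<noteq> (0,0,0)" using pq assms(2) by (cases b) (auto simp: nonzero3_def)
  ultimately obtain l where "a = smul l (ccross p q)" using linalg by blast
  hence "a = smul (l*c) b" using pq by (simp add: smul_smul)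
  thus ?thesis using assms(1) smul_nz by blast
qed

lemma cdot_smul: "cdot (smul t b) v = t * cdot b v"
  by (cases b; cases v) (simp add: algebra_simps)
lemma line_smul: "t \<noteq> 0 \<Longrightarrow> line_of (smul t b) = line_of b"
  by (auto simp: mem_line cdot_smul)

lemma linform_smul: "linform (smul t b) = pconst t * linform b"
  by (cases b) (simp add: linform_def pconst_mult algebra_simps)

lemma ev_q1: "ev q1 = 1" by (simp add: q1_def)
lemma ev_q0: "ev q0 = 0" by (simp add: q0_def)
lemma ev_mt: "ev mt = - th" by (simp add: mt_def)
lemma ev_qt: "ev qt = th" by (simp add: qt_def)
lemma ev_qw: "ev qw = ww" by (simp add: qw_def)
lemma ev_qwp: "a < 3 \<Longrightarrow> ev (qwp a) = ww^a"
proof -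
  assume "a < 3"
  hence "a = 0 \<or> a = 1 \<or> a = 2" by auto
  thus ?thesis
  proof (elim disjE)
    assume "a = 2"
    thus ?thesis using ww2' by (simp add: numeral_2_eq_2)
  qed (auto simp: ev_q1 ev_qw)
qed

lemma lt3: "(a::nat) < 3 \<Longrightarrow> a = 0 \<or> a = 1 \<or> a = 2" by auto

lemma pts_A: "a < 3 \<Longrightarrow> b < 3 \<Longrightarrow> pts!(3*a+b) = (q1, qwp a, qmul mt (qwp b))"
  by (auto dest!: lt3 simp: pts_def simp del: qmul.simps qwp.simps)
lemma pts_B: "a < 3 \<Longrightarrow> b < 3 \<Longrightarrow> pts!(9+3*a+b) = (qmul mt (qwp b), q1, qwp a)"
  by (auto dest!: lt3 simp: pts_def simp del: qmul.simps qwp.simps)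
lemma pts_C: "a < 3 \<Longrightarrow> b < 3 \<Longrightarrow> pts!(18+3*a+b) = (qwp a, qmul mt (qwp b), q1)"
  by (auto dest!: lt3 simp: pts_def simp del: qmul.simps qwp.simps)

definition "Pc k = evv (pts!k)"

lemma Pc_A: "a < 3 \<Longrightarrow> b < 3 \<Longrightarrow> Pc (3*a+b) = (1, ww^a, -th*ww^b)"
  by (simp add: Pc_def pts_A ev_mul ev_q1 ev_mt ev_qwp del: ev.simps qwp.simps qmul.simps)
lemma Pc_B: "a < 3 \<Longrightarrow> b < 3 \<Longrightarrow> Pc (9+3*a+b) = (-th*ww^b, 1, ww^a)"
  by (simp add: Pc_def pts_B ev_mul ev_q1 ev_mt ev_qwp del: ev.simps qwp.simps qmul.simps)
lemma Pc_C: "a < 3 \<Longrightarrow> b < 3 \<Longrightarrow> Pc (18+3*a+b) = (ww^a, -th*ww^b, 1)"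
  by (simp add: Pc_def pts_C ev_mul ev_q1 ev_mt ev_qwp del: ev.simps qwp.simps qmul.simps)

lemma root3: "(y::complex)^3 = x^3 \<Longrightarrow> \<exists>a<3. y = ww^a * x"
proof -
  assume h: "y^3 = x^3"
  have "(y - x) * (y - ww*x) * (y - ww^2*x) = y^3 - x^3" by (rule cube_fac'[OF ww2])
  hence "(y - x) * (y - ww*x) * (y - ww^2*x) = 0" using h by simp
  hence "y = x \<or> y = ww*x \<or> y = ww^2*x" by auto
  thus ?thesis
  proof (elim disjE)
    assume "y = x" thus ?thesis by (intro exI[of _ 0]) simp
  next
    assume "y = ww*x" thus ?thesis by (intro exI[of _ 1]) simp
  next
    assume "y = ww^2*x" thus ?thesis by (intro exI[of _ 2]) simp
  qed
qed

lemma wwp3: "(ww^a)^3 = 1"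
  by (metis power_mult mult.commute power_mult ww3 power_one)




lemma sext_Pc: "k < 27 \<Longrightarrow> sextactic (Pc k)"
proof -
  assume k: "k < 27"
  define a where "a = (k mod 9) div 3"
  define b where "b = k mod 3"
  have ab: "a < 3" "b < 3" by (simp_all add: a_def b_def less_mult_imp_div_less)
  have e1: "k = 9*(k div 9) + k mod 9" by simp
  have e2: "k mod 9 = 3*a + b"
  proof -
    have "k mod 9 = 3*((k mod 9) div 3) + (k mod 9) mod 3" by simp
    moreover have "(k mod 9) mod 3 = k mod 3" by (rule mod_mod_cancel) simp
    ultimately show ?thesis unfolding a_def b_def by simp
  qed
  have q: "k div 9 < 3" using k by (simp add: less_mult_imp_div_less)
  have "k = 3*a+b \<or> k = 9+3*a+b \<or> k = 18+3*a+b"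
    using lt3[OF q] e1 e2 by auto
  moreover have c: "(-th*ww^b)^3 = -2" using th3 wwp3[of b] by (simp add: power_mult_distrib)
  moreover have "(ww^a)^3 = 1" by (rule wwp3)
  ultimately show ?thesis using ab
    by (auto simp: sextactic_def Pc_A Pc_B Pc_C nonzero3_def)
qed

lemma sext_Pc_ex: assumes "sextactic v" shows "\<exists>k<27. \<exists>s. s \<noteq> 0 \<and> v = smul s (Pc k)"
proof -
  obtain x y z where v: "v = (x,y,z)" by (cases v) auto
  have nz: "\<not> (x = 0 \<and> y = 0 \<and> z = 0)" and cub: "x^3 + y^3 + z^3 = 0"
    and pr: "(x^3 - y^3) * (y^3 - z^3) * (z^3 - x^3) = 0"
    using assms v by (auto simp: sextactic_def nonzero3_def)
  have th3': "(-th*x)^3 = -2*x^3" for x using th3 by (simp add: power_mult_distrib)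
  from pr have "x^3 = y^3 \<or> y^3 = z^3 \<or> z^3 = x^3" by auto
  moreover
  { assume h: "x^3 = y^3"
    have "z^3 = -2*x^3" using cub h by (simp add: algebra_simps eq_neg_iff_add_eq_0)
    hence z3: "z^3 = (-th*x)^3" using th3'[of x] by simp
    obtain a where a: "a < 3" "y = ww^a * x" using root3[OF h[symmetric]] by blast
    obtain b where b: "b < 3" "z = ww^b * (-th*x)" using root3[OF z3] by blast
    have "x \<noteq> 0" using nz a b by auto
    moreover have "v = smul x (Pc (3*a+b))" using a b by (simp add: v Pc_A)
    moreover have "3*a+b < 27" using a b by simp
    ultimately have ?thesis by blast }
  moreover
  { assume h: "y^3 = z^3"
    have "x^3 = -2*y^3" using cub h by (simp add: algebra_simps eq_neg_iff_add_eq_0)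
    hence x3: "x^3 = (-th*y)^3" using th3'[of y] by simp
    obtain a where a: "a < 3" "z = ww^a * y" using root3[OF h[symmetric]] by blast
    obtain b where b: "b < 3" "x = ww^b * (-th*y)" using root3[OF x3] by blast
    have "y \<noteq> 0" using nz a b by auto
    moreover have "v = smul y (Pc (9+3*a+b))" using a b by (simp add: v Pc_B)
    moreover have "9+3*a+b < 27" using a b by simp
    ultimately have ?thesis by blast }
  moreover
  { assume h: "z^3 = x^3"
    have "y^3 = -2*z^3" using cub h by (simp add: algebra_simps eq_neg_iff_add_eq_0)
    hence y3: "y^3 = (-th*z)^3" using th3'[of z] by simp
    obtain a where a: "a < 3" "x = ww^a * z" using root3[OF h[symmetric]] by blast
    obtain b where b: "b < 3" "y = ww^b * (-th*z)" using root3[OF y3] by blast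
    have "z \<noteq> 0" using nz a b by auto
    moreover have "v = smul z (Pc (18+3*a+b))" using a b by (simp add: v Pc_C)
    moreover have "18+3*a+b < 27" using a b by simp
    ultimately have ?thesis by blast }
  ultimately show ?thesis by blast
qed

lemma chkE6: "\<forall>m<81. case tri!m of (i,j,k) \<Rightarrow> i < j \<and> j < k" by code_simp
lemma chkE7: "\<forall>m<81. HLL!m \<noteq> (0,0,0)" by code_simp

definition "Lc m = evv (lns!m)"

lemma HP: "k < 27 \<Longrightarrow> HPL!k = hmv (pts!k)"
  using chkE1 by (simp add: HPL[symmetric] ptsL)
lemma HL: "m < 81 \<Longrightarrow> HLL!m = hmv (lns!m)"
  using chkE1 by (simp add: HLL[symmetric] lnsL)

lemma L_on: assumes "m < 81" "tri!m = (i,j,k)"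
  shows "i < j \<and> j < k \<and> k < 27 \<and> cdot (Lc m) (Pc i) = 0 \<and> cdot (Lc m) (Pc j) = 0 \<and> cdot (Lc m) (Pc k) = 0"
proof -
  have "i < 27 \<and> j < 27 \<and> k < 27 \<and> qdot (lnsL!m) (ptsL!i) = q0 \<and> qdot (lnsL!m) (ptsL!j) = q0 \<and> qdot (lnsL!m) (ptsL!k) = q0"
    using chkE1 assms by fastforce
  moreover have "i < j \<and> j < k" using chkE6 assms by fastforce
  ultimately show ?thesis by (simp add: Lc_def Pc_def ev_dot ptsL lnsL ev_q0)
qed

lemma L_off: assumes "m < 81" "tri!m = (i,j,l)" "k < 27" "k \<noteq> i" "k \<noteq> j" "k \<noteq> l"
  shows "cdot (Lc m) (Pc k) \<noteq> 0"
proof -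
  have "fdot (HLL!m) (HPL!k) \<noteq> 0" using chkE2 assms by fastforce
  thus ?thesis using assms by (simp add: HP HL Lc_def Pc_def fdot_nz)
qed

lemma L_nz: assumes "m < 81" shows "nonzero3 (Lc m)"
proof -
  obtain a b c where abc: "lns!m = (a,b,c)" by (cases "lns!m") auto
  have "hmv (lns!m) \<noteq> (0,0,0)" using chkE7 assms HL by auto
  hence "hm a \<noteq> 0 \<or> hm b \<noteq> 0 \<or> hm c \<noteq> 0" using abc by auto
  hence "ev a \<noteq> 0 \<or> ev b \<noteq> 0 \<or> ev c \<noteq> 0" using ev0_hm by blast
  thus ?thesis by (simp add: Lc_def abc nonzero3_def)
qed

lemma allpairs_mem: "i < j \<Longrightarrow> j < 27 \<Longrightarrow> (i,j) \<in> set allpairs"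
  by (simp add: allpairs_def del: upt_rec_numeral) (rule bexI[of _ i], auto)

lemma crs_mem: assumes "i < j" "j < 27" shows "(i,j,fcross (HPL!i) (HPL!j)) \<in> set crs"
proof -
  have "(i,j) \<in> set allpairs" using allpairs_mem assms by blast
  hence "(\<lambda>(i,j). (i,j,fcross (HPL!i) (HPL!j))) (i,j) \<in> set crs" unfolding crs_def set_map by (rule imageI)
  thus ?thesis by simp
qed

lemma ccross_swap: "ccross u v = (0,0,0) \<longleftrightarrow> ccross v u = (0,0,0)"
  by (cases u; cases v) (auto simp: mult.commute)

lemma P_cross: assumes "i < 27" "j < 27" "i \<noteq> j" shows "ccross (Pc i) (Pc j) \<noteq> (0,0,0)"
proof -
  have *: "ccross (Pc a) (Pc b) \<noteq> (0,0,0)" if "a < b" "b < 27" for a b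
  proof -
    have "fcross (HPL!a) (HPL!b) \<noteq> (0,0,0)" using chkE5 crs_mem[OF that] by (auto simp: list_all_iff)
    thus ?thesis using that by (simp add: HP Pc_def fcross_nz)
  qed
  show ?thesis using assms *[of i j] *[of j i] ccross_swap by (cases "i < j") auto
qed

lemma sext_nz: "sextactic v \<Longrightarrow> nonzero3 v"
  by (cases v) (simp add: sextactic_def)
lemma P_nz: "k < 27 \<Longrightarrow> nonzero3 (Pc k)"
  using sext_Pc sext_nz by blast

lemma coll: assumes "i < j" "j < k" "k < 27" "cdot (ccross (Pc i) (Pc j)) (Pc k) = 0"
  shows "\<exists>m<81. tri!m = (i,j,k)"
proof -
  have "ev (qdot (qcross (pts!i) (pts!j)) (pts!k)) = 0"
    using assms(4) by (simp add: Pc_def ev_cross ev_dot)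
  hence "hm (qdot (qcross (pts!i) (pts!j)) (pts!k)) = 0" by (rule ev0_hm)
  hence f: "fdot (fcross (HPL!i) (HPL!j)) (HPL!k) = 0"
    using assms by (simp add: HP hm_dot hm_cross)
  have g: "(i,j,k) \<in> set ((\<lambda>(i,j,c). map (\<lambda>k. (i,j,k)) (filter (\<lambda>k. fdot c (HPL!k) = 0) [Suc j..<27])) (i,j,fcross (HPL!i) (HPL!j)))"
  proof -
    have "k \<in> set (filter (\<lambda>k. fdot (fcross (HPL!i) (HPL!j)) (HPL!k) = 0) [Suc j..<27])"
      unfolding set_filter set_upt using assms f by auto
    thus ?thesis unfolding prod.case set_map by (rule imageI)
  qed
  have cm: "(i,j,fcross (HPL!i) (HPL!j)) \<in> set crs" using crs_mem assms by simp
  have "(i,j,k) \<in> set (concat (map (\<lambda>(i,j,c). map (\<lambda>k. (i,j,k)) (filter (\<lambda>k. fdot c (HPL!k) = 0) [Suc j..<27])) crs))"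
    unfolding set_concat set_map image_image by (rule UN_I[where B="\<lambda>x. set ((\<lambda>(i,j,c). map (\<lambda>k. (i,j,k)) (filter (\<lambda>k. fdot c (HPL!k) = 0) [Suc j..<27])) x)", OF cm g])
  hence "(i,j,k) \<in> set tri" by (simp only: chkE3)
  thus ?thesis using chkE1 by (metis in_set_conv_nth)
qed

lemma cdot_smul2: "cdot a (smul t v) = t * cdot a v"
  by (cases a; cases v) (simp add: algebra_simps)

lemma sp_cross: "same_point u v \<Longrightarrow> ccross u v = (0,0,0)"
  by (cases u; cases v) (auto simp: same_point_def)

lemma sp_smul: "s1 \<noteq> 0 \<Longrightarrow> s2 \<noteq> 0 \<Longrightarrow> same_point (smul s1 v) (smul s2 v)"
  by (cases v) (auto simp: same_point_def intro!: exI[of _ "s1/s2"])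

lemma key_sorted:
  assumes "i < j" "j < k" "k < 27" "nonzero3 a"
    "cdot a (Pc i) = 0" "cdot a (Pc j) = 0" "cdot a (Pc k) = 0"
  shows "\<exists>m<81. line_of a = line_of (Lc m)"
proof -
  have cr: "ccross (Pc i) (Pc j) \<noteq> (0,0,0)" using P_cross assms by simp
  obtain l where l: "a = smul l (ccross (Pc i) (Pc j))" using linalg[OF assms(5,6) cr] by blast
  have l0: "l \<noteq> 0" using assms(4) l smul_nz by blast
  have "l * cdot (ccross (Pc i) (Pc j)) (Pc k) = 0" using assms(7) l by (simp add: cdot_smul)
  hence "cdot (ccross (Pc i) (Pc j)) (Pc k) = 0" using l0 by simp
  then obtain m where m: "m < 81" "tri!m = (i,j,k)" using coll assms by blast
  have on: "cdot (Lc m) (Pc i) = 0" "cdot (Lc m) (Pc j) = 0" using L_on[OF m] by auto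
  obtain mu where mu: "Lc m = smul mu (ccross (Pc i) (Pc j))" using linalg[OF on cr] by blast
  have mu0: "mu \<noteq> 0" using L_nz[OF m(1)] mu smul_nz by metis
  have "a = smul (l/mu) (Lc m)" using l mu mu0 by (simp add: smul_smul)
  hence "line_of a = line_of (Lc m)" using l0 mu0 line_smul by simp
  thus ?thesis using m by blast
qed

lemma key:
  assumes "i < 27" "j < 27" "k < 27" "i \<noteq> j" "j \<noteq> k" "i \<noteq> k" "nonzero3 a"
    "cdot a (Pc i) = 0" "cdot a (Pc j) = 0" "cdot a (Pc k) = 0"
  shows "\<exists>m<81. line_of a = line_of (Lc m)"
proof -
  have "i < j \<and> j < k \<or> i < k \<and> k < j \<or> j < i \<and> i < k \<or> j < k \<and> k < i \<or> k < i \<and> i < j \<or> k < j \<and> j < i"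
    using assms(4-6) by linarith
  thus ?thesis
  proof (elim disjE conjE)
    assume "i < j" "j < k" thus ?thesis using key_sorted assms by blast
  next
    assume "i < k" "k < j" thus ?thesis using key_sorted[of i k j] assms by blast
  next
    assume "j < i" "i < k" thus ?thesis using key_sorted[of j i k] assms by blast
  next
    assume "j < k" "k < i" thus ?thesis using key_sorted[of j k i] assms by blast
  next
    assume "k < i" "i < j" thus ?thesis using key_sorted[of k i j] assms by blast
  next
    assume "k < j" "j < i" thus ?thesis using key_sorted[of k j i] assms by blast
  qed
qed

lemma sub1: assumes "L \<in> sextactic_lines" shows "\<exists>m<81. L = line_of (Lc m)"
proof -
  obtain a p q r where a: "nonzero3 a" "L = line_of a" and pqr: "p \<in> L" "q \<in> L" "r \<in> L"
    "sextactic p" "sextactic q" "sextactic r" "\<not> same_point p q" "\<not> same_point q r" "\<not> same_point p r"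
    using assms unfolding sextactic_lines_def is_line_def by blast
  obtain i s1 where i: "i < 27" "s1 \<noteq> 0" "p = smul s1 (Pc i)" using sext_Pc_ex[OF pqr(4)] by blast
  obtain j s2 where j: "j < 27" "s2 \<noteq> 0" "q = smul s2 (Pc j)" using sext_Pc_ex[OF pqr(5)] by blast
  obtain k s3 where k: "k < 27" "s3 \<noteq> 0" "r = smul s3 (Pc k)" using sext_Pc_ex[OF pqr(6)] by blast
  have "i \<noteq> j" using pqr(7) i j sp_smul by blast
  moreover have "j \<noteq> k" using pqr(8) j k sp_smul by blast
  moreover have "i \<noteq> k" using pqr(9) i k sp_smul by blast
  moreover have "cdot a (Pc i) = 0" using pqr(1) a i by (simp add: mem_line cdot_smul2)
  moreover have "cdot a (Pc j) = 0" using pqr(2) a j by (simp add: mem_line cdot_smul2)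
  moreover have "cdot a (Pc k) = 0" using pqr(3) a k by (simp add: mem_line cdot_smul2)
  ultimately show ?thesis using key[OF i(1) j(1) k(1)] a by metis
qed

lemma sub2: assumes "m < 81" shows "line_of (Lc m) \<in> sextactic_lines"
proof -
  obtain i j k where t: "tri!m = (i,j,k)" by (metis prod_cases3)
  note on = L_on[OF assms t]
  have nz: "nonzero3 (Pc i)" "nonzero3 (Pc j)" "nonzero3 (Pc k)" using P_nz on by auto
  have mem: "Pc i \<in> line_of (Lc m)" "Pc j \<in> line_of (Lc m)" "Pc k \<in> line_of (Lc m)"
    using on nz by (simp_all add: mem_line)
  have sx: "sextactic (Pc i)" "sextactic (Pc j)" "sextactic (Pc k)" using sext_Pc on by auto
  have ns: "\<not> same_point (Pc i) (Pc j)" "\<not> same_point (Pc j) (Pc k)" "\<not> same_point (Pc i) (Pc k)"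
    using sp_cross P_cross on by (metis less_trans less_not_refl)+
  show ?thesis unfolding sextactic_lines_def is_line_def using L_nz[OF assms] mem sx ns by blast
qed

lemma S_eq: "sextactic_lines = (\<lambda>m. line_of (Lc m)) ` {..<81}"
  using sub1 sub2 by blast

lemma S_inj: "inj_on (\<lambda>m. line_of (Lc m)) {..<81}"
proof (rule inj_onI)
  fix m n assume m: "m \<in> {..<81}" and n: "n \<in> {..<81}" and eq: "line_of (Lc m) = line_of (Lc n)"
  obtain i j k where t: "tri!m = (i,j,k)" by (metis prod_cases3)
  obtain i' j' k' where t': "tri!n = (i',j',k')" by (metis prod_cases3)
  note on = L_on[OF _ t] note on' = L_on[OF _ t']
  have "x \<in> {i',j',k'}" if "x \<in> {i,j,k}" for x
  proof (rule ccontr)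
    assume "x \<notin> {i',j',k'}"
    hence ne: "cdot (Lc n) (Pc x) \<noteq> 0" using L_off[OF _ t'] n on m that by auto
    have "x < 27" using on m that by auto
    hence "Pc x \<in> line_of (Lc m)" using on m that P_nz by (auto simp: mem_line)
    thus False using eq ne by (simp add: mem_line)
  qed
  hence "i \<in> {i',j',k'}" "j \<in> {i',j',k'}" "k \<in> {i',j',k'}" by auto
  moreover have "i < j" "j < k" "i' < j'" "j' < k'" using on on' m n by auto
  ultimately have "(i,j,k) = (i',j',k')" by auto
  hence "tri!m = tri!n" using t t' by simp
  thus "m = n" using chkE4 chkE1 m n by (simp add: nth_eq_iff_index_eq)
qed

context
  fixes w t :: "'a::comm_ring_1"
  assumes w2: "w^2 + w + 1 = 0" and t3: "t^3 = 2"
begin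

lemma ca: "(1+t)^3 = 3*(t*w^2-1)*(t*w-1)"
proof -
  have "(1+t)^3 = 3*(t*w^2-1)*(t*w-1) + (w^2+w+1)*(3*t + 3*t^2 - 3*w*t^2) + (t^3-2)"
    by (simp add: algebra_simps power2_eq_square power3_eq_cube)
  thus ?thesis using w2 t3 by simp
qed
lemma cb: "(t^2*w-1)^3 = 3*(t*w^2-1)*(t*w^2-1)"
proof -
  have "(t^2*w-1)^3 = 3*(t*w^2-1)*(t*w^2-1) + (w^2+w+1)*(6*t - 3*(t*t*t*t) - (t*t*t*t*t*t) + 3*w*t^2 + w*(t*t*t*t*t*t) - 3*w^2*t^2)
     + (t^3-2)*(2 + 3*t + t^3 + 3*w*t)"
    by (simp add: algebra_simps power2_eq_square power3_eq_cube)
  thus ?thesis using w2 t3 by simp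
qed
lemma cg: "(1+t*w)^3 = 3*(t*w^2-1)*(t-1)"
proof -
  have "(1+t*w)^3 = 3*(t*w^2-1)*(t-1) + (w^2+w+1)*(3*t - t^3 + w*t^3) + (t^3-2)"
    by (simp add: algebra_simps power2_eq_square power3_eq_cube)
  thus ?thesis using w2 t3 by simp
qed
lemma cp: "(t*w-1)*(t*w^2-1)*(t-1) = 1"
proof -
  have "(t*w-1)*(t*w^2-1)*(t-1) = 1 + (w^2+w+1)*(t - t^3 - w*t^2 + w*t^3) + (t^3-2)"
    by (simp add: algebra_simps power2_eq_square power3_eq_cube)
  thus ?thesis using w2 t3 by simp
qed

lemma Gsub: "((1+t)^3*A^3 + (t^2*w-1)^3*B^3 + (1+t*w)^3*C^3)^3 - 27*(1+t)^3*(t^2*w-1)^3*(1+t*w)^3*A^3*B^3*C^3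
   = (3*(t*w^2-1))^3 * (((t*w-1)*A^3 + (t*w^2-1)*B^3 + (t-1)*C^3)^3 - 27*(A*B*C)^3)"
proof -
  define k where "k = 3*(t*w^2-1)"
  define Q where "Q = t*w-1"
  define R where "R = t*w^2-1"
  define P where "P = t-1"
  have a: "(1+t)^3 = k*Q" and b: "(t^2*w-1)^3 = k*R" and c: "(1+t*w)^3 = k*P"
    using ca cb cg by (simp_all add: k_def Q_def R_def P_def mult.assoc)
  have qrp: "Q*R*P = 1" using cp by (simp add: Q_def R_def P_def)
  have "(k*Q*A^3 + k*R*B^3 + k*P*C^3)^3 = k^3 * (Q*A^3 + R*B^3 + P*C^3)^3"
    by (simp add: algebra_simps flip: power_mult_distrib)
  moreover have "27*(k*Q)*(k*R)*(k*P)*A^3*B^3*C^3 = k^3 * (27*(Q*R*P)*(A*B*C)^3)"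
    by (simp add: algebra_simps power_mult_distrib power3_eq_cube)
  ultimately show ?thesis unfolding a b c qrp
    by (simp add: k_def Q_def R_def P_def algebra_simps)
qed

end

abbreviation pX :: cpoly3 where "pX \<equiv> pvar 0"
abbreviation pY :: cpoly3 where "pY \<equiv> pvar 1"
abbreviation pZ :: cpoly3 where "pZ \<equiv> pvar 2"
abbreviation pW :: cpoly3 where "pW \<equiv> pconst ww"
abbreviation pT :: cpoly3 where "pT \<equiv> pconst th"

lemma W2: "pW^2 + pW + 1 = 0"
proof -
  have "pconst (ww^2 + ww + 1) = pconst 0" using ww2 by simp
  thus ?thesis by (simp add: pconst_add pconst_pow pconst_1 pconst_0)
qed
lemma T3: "pT^3 = 2"
proof -
  have "pconst (th^3) = pconst 2" using th3 by simp
  thus ?thesis by (simp add: pconst_pow pconst_numeral)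
qed

lemma lin_evv: "linform (evv (a,b,c)) = pconst (ev a) * pX + pconst (ev b) * pY + pconst (ev c) * pZ"
  by (simp add: linform_def del: ev.simps)

lemma ev_qal: "ev qal = 1 + th" by (simp add: qal_def)
lemma ev_qbe: "ev qbe = th^2*ww - 1" by (simp add: qbe_def algebra_simps)
lemma ev_qga: "ev qga = 1 + th*ww" by (simp add: qga_def algebra_simps)

lemma pc_wp: "i < 3 \<Longrightarrow> pconst (ev (qwp i)) = pW^i" by (simp add: ev_qwp pconst_pow del: qwp.simps)
lemma pc_q1: "pconst (ev q1) = 1" by (simp add: ev_q1 pconst_1)
lemma pc_q0: "pconst (ev q0) = 0" by (simp add: ev_q0 pconst_0)
lemma pc_neg: "pconst (ev (qneg x)) = - pconst (ev x)" by (simp add: ev_neg pconst_neg del: ev.simps)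
lemma pc_mul: "pconst (ev (qmul x y)) = pconst (ev x) * pconst (ev y)" by (simp add: ev_mul pconst_mult del: ev.simps)
lemma pc_qt: "pconst (ev qt) = pT" by (simp add: ev_qt)
lemma pc_qal: "pconst (ev qal) = 1 + pT" by (simp add: ev_qal pconst_add pconst_1)
lemma pc_qbe: "pconst (ev qbe) = pT^2*pW - 1" by (simp add: ev_qbe pconst_diff pconst_mult pconst_pow pconst_1)
lemma pc_qga: "pconst (ev qga) = 1 + pT*pW" by (simp add: ev_qga pconst_add pconst_mult pconst_1)

lemmas pcs = pc_wp pc_q1 pc_q0 pc_neg pc_mul pc_qt pc_qal pc_qbe pc_qga lin_evv

lemma e1a: "i < 3 \<Longrightarrow> linform (evv (q1, qneg (qwp i), q0)) = pX - pW^i*pY"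
  unfolding lin_evv by (simp add: pcs del: ev.simps qwp.simps qmul.simps)
lemma e1b: "i < 3 \<Longrightarrow> linform (evv (q0, q1, qneg (qwp i))) = pY - pW^i*pZ"
  unfolding lin_evv by (simp add: pcs del: ev.simps qwp.simps qmul.simps)
lemma e1c: "i < 3 \<Longrightarrow> linform (evv (qneg (qwp i), q0, q1)) = pZ - pW^i*pX"
  unfolding lin_evv by (simp add: pcs del: ev.simps qwp.simps qmul.simps)

lemma e2a: "k < 3 \<Longrightarrow> linform (evv (qmul qt (qwp k), q0, q1)) = pZ + pW^k*(pT*pX)"
  unfolding lin_evv by (simp add: pcs algebra_simps del: ev.simps qwp.simps qmul.simps)
lemma e2b: "k < 3 \<Longrightarrow> linform (evv (q0, qmul qt (qwp k), q1)) = pZ + pW^k*(pT*pY)"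
  unfolding lin_evv by (simp add: pcs algebra_simps del: ev.simps qwp.simps qmul.simps)
lemma e2c: "k < 3 \<Longrightarrow> linform (evv (q1, qmul qt (qwp k), q0)) = pX + pW^k*(pT*pY)"
  unfolding lin_evv by (simp add: pcs algebra_simps del: ev.simps qwp.simps qmul.simps)
lemma e2d: "k < 3 \<Longrightarrow> linform (evv (q1, q0, qmul qt (qwp k))) = pX + pW^k*(pT*pZ)"
  unfolding lin_evv by (simp add: pcs algebra_simps del: ev.simps qwp.simps qmul.simps)
lemma e2e: "k < 3 \<Longrightarrow> linform (evv (q0, q1, qmul qt (qwp k))) = pY + pW^k*(pT*pZ)"
  unfolding lin_evv by (simp add: pcs algebra_simps del: ev.simps qwp.simps qmul.simps)
lemma e2f: "k < 3 \<Longrightarrow> linform (evv (qmul qt (qwp k), q1, q0)) = pY + pW^k*(pT*pX)"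
  unfolding lin_evv by (simp add: pcs algebra_simps del: ev.simps qwp.simps qmul.simps)

lemma F1: "prod_list (map (\<lambda>v. linform (evv v)) lnsF1) = (pX^3 - pY^3) * (pY^3 - pZ^3) * (pZ^3 - pX^3)"
proof -
  have "map (\<lambda>v. linform (evv v)) lnsF1 = [pX - pY, pY - pZ, pZ - pX, pX - pW*pY, pY - pW*pZ, pZ - pW*pX,
      pX - pW^2*pY, pY - pW^2*pZ, pZ - pW^2*pX]"
    by (simp add: lnsF1_def e1a e1b e1c del: evv.simps ev.simps qwp.simps qmul.simps)
  hence "prod_list (map (\<lambda>v. linform (evv v)) lnsF1) =
     ((pX - pY) * (pX - pW*pY) * (pX - pW^2*pY)) * ((pY - pZ) * (pY - pW*pZ) * (pY - pW^2*pZ))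
     * ((pZ - pX) * (pZ - pW*pX) * (pZ - pW^2*pX))" by (simp add: mult_ac)
  thus ?thesis unfolding cube_fac'[OF W2] .
qed

lemma F2: "prod_list (map (\<lambda>v. linform (evv v)) lnsF2) =
   (pZ^3 + 2*pX^3) * (pZ^3 + 2*pY^3) * (pX^3 + 2*pY^3) * (pX^3 + 2*pZ^3) * (pY^3 + 2*pZ^3) * (pY^3 + 2*pX^3)"
proof -
  have "map (\<lambda>v. linform (evv v)) lnsF2 = [pZ + pT*pX, pZ + pT*pY, pX + pT*pY, pX + pT*pZ, pY + pT*pZ, pY + pT*pX,
      pZ + pW*(pT*pX), pZ + pW*(pT*pY), pX + pW*(pT*pY), pX + pW*(pT*pZ), pY + pW*(pT*pZ), pY + pW*(pT*pX),
      pZ + pW^2*(pT*pX), pZ + pW^2*(pT*pY), pX + pW^2*(pT*pY), pX + pW^2*(pT*pZ), pY + pW^2*(pT*pZ), pY + pW^2*(pT*pX)]"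
    by (simp add: lnsF2_def e2a e2b e2c e2d e2e e2f del: evv.simps ev.simps qwp.simps qmul.simps)
  hence "prod_list (map (\<lambda>v. linform (evv v)) lnsF2) =
     ((pZ + pT*pX) * (pZ + pW*(pT*pX)) * (pZ + pW^2*(pT*pX))) * ((pZ + pT*pY) * (pZ + pW*(pT*pY)) * (pZ + pW^2*(pT*pY)))
   * ((pX + pT*pY) * (pX + pW*(pT*pY)) * (pX + pW^2*(pT*pY))) * ((pX + pT*pZ) * (pX + pW*(pT*pZ)) * (pX + pW^2*(pT*pZ)))
   * ((pY + pT*pZ) * (pY + pW*(pT*pZ)) * (pY + pW^2*(pT*pZ))) * ((pY + pT*pX) * (pY + pW*(pT*pX)) * (pY + pW^2*(pT*pX)))"
    by (simp add: mult_ac)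
  also have "\<dots> = (pZ^3 + 2*pX^3) * (pZ^3 + 2*pY^3) * (pX^3 + 2*pY^3) * (pX^3 + 2*pZ^3) * (pY^3 + 2*pZ^3) * (pY^3 + 2*pX^3)"
    unfolding cube_fac[OF W2] power_mult_distrib T3 ..
  finally show ?thesis .
qed

abbreviation "pa \<equiv> 1 + pT"
abbreviation "pb \<equiv> pT^2*pW - 1"
abbreviation "pg \<equiv> 1 + pT*pW"
abbreviation "pk \<equiv> 3*(pT*pW^2-1)"

lemma eG1: "i < 3 \<Longrightarrow> j < 3 \<Longrightarrow> linform (evv (qmul qal (qwp i), qmul qbe (qwp j), qga)) = pa*pW^i*pX + pb*pW^j*pY + pg*pZ"
  unfolding lin_evv by (simp add: pcs del: ev.simps qwp.simps qmul.simps)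
lemma eG2: "i < 3 \<Longrightarrow> j < 3 \<Longrightarrow> linform (evv (qmul qbe (qwp j), qga, qmul qal (qwp i))) = pa*pW^i*pZ + pb*pW^j*pX + pg*pY"
  unfolding lin_evv by (simp add: pcs algebra_simps del: ev.simps qwp.simps qmul.simps)
lemma eG3: "i < 3 \<Longrightarrow> j < 3 \<Longrightarrow> linform (evv (qga, qmul qal (qwp i), qmul qbe (qwp j))) = pa*pW^i*pY + pb*pW^j*pZ + pg*pX"
  unfolding lin_evv by (simp add: pcs algebra_simps del: ev.simps qwp.simps qmul.simps)
lemma eG4: "i < 3 \<Longrightarrow> j < 3 \<Longrightarrow> linform (evv (qmul qbe (qwp j), qmul qal (qwp i), qga)) = pa*pW^i*pY + pb*pW^j*pX + pg*pZ"
  unfolding lin_evv by (simp add: pcs algebra_simps del: ev.simps qwp.simps qmul.simps)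
lemma eG5: "i < 3 \<Longrightarrow> j < 3 \<Longrightarrow> linform (evv (qmul qal (qwp i), qga, qmul qbe (qwp j))) = pa*pW^i*pX + pb*pW^j*pZ + pg*pY"
  unfolding lin_evv by (simp add: pcs algebra_simps del: ev.simps qwp.simps qmul.simps)
lemma eG6: "i < 3 \<Longrightarrow> j < 3 \<Longrightarrow> linform (evv (qga, qmul qbe (qwp j), qmul qal (qwp i))) = pa*pW^i*pZ + pb*pW^j*pY + pg*pX"
  unfolding lin_evv by (simp add: pcs algebra_simps del: ev.simps qwp.simps qmul.simps)

abbreviation "fl \<equiv> (\<lambda>v. linform (evv v))"

lemma G1: "prod_list (map fl lnsG1) = pk^3 * (((pT*pW-1)*pX^3 + (pT*pW^2-1)*pY^3 + (pT-1)*pZ^3)^3 - 27*(pX*pY*pZ)^3)"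
proof -
  have "prod_list (map fl lnsG1) = prod_list (map (\<lambda>i. prod_list (map (\<lambda>j. pa * pW^i * pX + pb * pW^j * pY + pg * pZ) [0,1,2])) [0,1,2])"
    by (simp add: lnsG1_def eG1 del: evv.simps ev.simps qwp.simps qmul.simps)
  thus ?thesis unfolding N3[OF W2] Gsub[OF W2 T3] .
qed
lemma G2: "prod_list (map fl lnsG2) = pk^3 * (((pT*pW-1)*pZ^3 + (pT*pW^2-1)*pX^3 + (pT-1)*pY^3)^3 - 27*(pX*pY*pZ)^3)"
proof -
  have "prod_list (map fl lnsG2) = prod_list (map (\<lambda>i. prod_list (map (\<lambda>j. pa * pW^i * pZ + pb * pW^j * pX + pg * pY) [0,1,2])) [0,1,2])"
    by (simp add: lnsG2_def eG2 del: evv.simps ev.simps qwp.simps qmul.simps)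
  thus ?thesis unfolding N3[OF W2] Gsub[OF W2 T3] by (simp only: mult_ac)
qed
lemma G3: "prod_list (map fl lnsG3) = pk^3 * (((pT*pW-1)*pY^3 + (pT*pW^2-1)*pZ^3 + (pT-1)*pX^3)^3 - 27*(pX*pY*pZ)^3)"
proof -
  have "prod_list (map fl lnsG3) = prod_list (map (\<lambda>i. prod_list (map (\<lambda>j. pa * pW^i * pY + pb * pW^j * pZ + pg * pX) [0,1,2])) [0,1,2])"
    by (simp add: lnsG3_def eG3 del: evv.simps ev.simps qwp.simps qmul.simps)
  thus ?thesis unfolding N3[OF W2] Gsub[OF W2 T3] by (simp only: mult_ac)
qed
lemma G4: "prod_list (map fl lnsG4) = pk^3 * (((pT*pW-1)*pY^3 + (pT*pW^2-1)*pX^3 + (pT-1)*pZ^3)^3 - 27*(pX*pY*pZ)^3)"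
proof -
  have "prod_list (map fl lnsG4) = prod_list (map (\<lambda>i. prod_list (map (\<lambda>j. pa * pW^i * pY + pb * pW^j * pX + pg * pZ) [0,1,2])) [0,1,2])"
    by (simp add: lnsG4_def eG4 del: evv.simps ev.simps qwp.simps qmul.simps)
  thus ?thesis unfolding N3[OF W2] Gsub[OF W2 T3] by (simp only: mult_ac)
qed
lemma G5: "prod_list (map fl lnsG5) = pk^3 * (((pT*pW-1)*pX^3 + (pT*pW^2-1)*pZ^3 + (pT-1)*pY^3)^3 - 27*(pX*pY*pZ)^3)"
proof -
  have "prod_list (map fl lnsG5) = prod_list (map (\<lambda>i. prod_list (map (\<lambda>j. pa * pW^i * pX + pb * pW^j * pZ + pg * pY) [0,1,2])) [0,1,2])"
    by (simp add: lnsG5_def eG5 del: evv.simps ev.simps qwp.simps qmul.simps)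
  thus ?thesis unfolding N3[OF W2] Gsub[OF W2 T3] by (simp only: mult_ac)
qed
lemma G6: "prod_list (map fl lnsG6) = pk^3 * (((pT*pW-1)*pZ^3 + (pT*pW^2-1)*pY^3 + (pT-1)*pX^3)^3 - 27*(pX*pY*pZ)^3)"
proof -
  have "prod_list (map fl lnsG6) = prod_list (map (\<lambda>i. prod_list (map (\<lambda>j. pa * pW^i * pZ + pb * pW^j * pY + pg * pX) [0,1,2])) [0,1,2])"
    by (simp add: lnsG6_def eG6 del: evv.simps ev.simps qwp.simps qmul.simps)
  thus ?thesis unfolding N3[OF W2] Gsub[OF W2 T3] by (simp only: mult_ac)
qed

lemma pow18: "(k::'a::comm_ring_1)^3*a1 * (k^3*a2) * (k^3*a3) * (k^3*a4) * (k^3*a5) * (k^3*a6) = k^18 * (a1*a2*a3*a4*a5*a6)"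
proof -
  have "k^18 = k^3*k^3*k^3*k^3*k^3*k^3" by (simp flip: power_add)
  thus ?thesis by (simp add: mult_ac)
qed

definition "F1R = (pX^3 - pY^3) * (pY^3 - pZ^3) * (pZ^3 - pX^3)"
definition "F2R = (pZ^3 + 2*pX^3) * (pZ^3 + 2*pY^3) * (pX^3 + 2*pY^3) * (pX^3 + 2*pZ^3) * (pY^3 + 2*pZ^3) * (pY^3 + 2*pX^3)"

lemma allprod: "prod_list (map fl lns) = F1R * F2R * (pk^18 * PsiE (pX^3) (pY^3) (pZ^3) (pX*pY*pZ))"
proof -
  have "prod_list (map fl lns) = prod_list (map fl lnsF1) * prod_list (map fl lnsF2) *
     (prod_list (map fl lnsG1) * prod_list (map fl lnsG2) * prod_list (map fl lnsG3) *
      prod_list (map fl lnsG4) * prod_list (map fl lnsG5) * prod_list (map fl lnsG6))"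
    unfolding lns_def by (simp add: mult_ac del: evv.simps)
  also have "\<dots> = F1R * F2R * (pk^18 * PsiE (pX^3) (pY^3) (pZ^3) (pX*pY*pZ))"
    unfolding F1 F2 G1 G2 G3 G4 G5 G6 pow18 Eprod[OF W2 T3] F1R_def F2R_def ..
  finally show ?thesis .
qed

lemma intp_F: "integral_poly (F1R * F2R * PsiE (pX^3) (pY^3) (pZ^3) (pX*pY*pZ))"
  unfolding F1R_def F2R_def
  by (intro intp_mult intp_diff intp_add intp_pow intp_pvar intp_numeral intp_PsiE)

lemma pconst_prod: "pconst (\<Prod>m\<in>A. f m) = (\<Prod>m\<in>A. pconst (f m))"
  by (induction A rule: infinite_finite_induct) (simp_all add: pconst_1 pconst_mult)

lemma prod_nth: "(\<Prod>m<length xs. g (xs!m)) = prod_list (map g xs)"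
  by (induction xs) (simp_all add: prod.lessThan_Suc_shift del: prod.lessThan_Suc)

lemma len_lns: "length lns = 81" using chkE1 by (simp add: lnsL)

lemma kappa_nz: "th*ww^2 \<noteq> 1"
proof
  assume h: "th*ww^2 = 1"
  have "(th*ww^2)^3 = th^3 * (ww^3)^2" by (simp add: power_mult_distrib flip: power_mult)
  hence "(1::complex) = 2" using h th3 ww3 by simp
  thus False by simp
qed

theorem mainTheorem9:
  fixes lf :: "vec3 set \<Rightarrow> vec3"
  assumes "\<forall>L \<in> sextactic_lines. nonzero3 (lf L) \<and> line_of (lf L) = L"
  shows "\<exists>c::complex. c \<noteq> 0 \<and>
           integral_poly (pconst c * (\<Prod>L \<in> sextactic_lines. linform (lf L)))"
proof -
  have "\<exists>t. t \<noteq> 0 \<and> lf (line_of (Lc m)) = smul t (Lc m)" if m: "m < 81" for m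
  proof -
    have L: "line_of (Lc m) \<in> sextactic_lines" by (rule sub2[OF m])
    hence "nonzero3 (lf (line_of (Lc m)))" "line_of (lf (line_of (Lc m))) = line_of (Lc m)"
      using assms by auto
    thus ?thesis using line_eq_prop L_nz[OF m] by blast
  qed
  then obtain tf where tf: "\<And>m. m < 81 \<Longrightarrow> tf m \<noteq> 0 \<and> lf (line_of (Lc m)) = smul (tf m) (Lc m)"
    by metis
  define K where "K = (\<Prod>m<81. tf m) * (3*(th*ww^2-1))^18"
  have K0: "K \<noteq> 0" unfolding K_def using tf kappa_nz by simp
  have "(\<Prod>L \<in> sextactic_lines. linform (lf L)) = (\<Prod>m<81. linform (lf (line_of (Lc m))))"
    unfolding S_eq by (simp add: prod.reindex[OF S_inj])
  also have "\<dots> = (\<Prod>m<81. pconst (tf m) * linform (Lc m))"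
    by (rule prod.cong) (simp_all add: tf linform_smul)
  also have "\<dots> = pconst (\<Prod>m<81. tf m) * (\<Prod>m<81. linform (Lc m))"
    by (simp add: prod.distrib pconst_prod)
  also have "(\<Prod>m<81. linform (Lc m)) = prod_list (map fl lns)"
    using prod_nth[of fl lns] len_lns by (simp add: Lc_def)
  also have "\<dots> = F1R * F2R * (pk^18 * PsiE (pX^3) (pY^3) (pZ^3) (pX*pY*pZ))" by (rule allprod)
  also have "pk = pconst (3*(th*ww^2-1))"
    by (simp add: pconst_mult pconst_diff pconst_pow pconst_1 pconst_numeral)
  finally have eq: "(\<Prod>L \<in> sextactic_lines. linform (lf L)) =
     pconst K * (F1R * F2R * PsiE (pX^3) (pY^3) (pZ^3) (pX*pY*pZ))"
    unfolding K_def by (simp add: pconst_mult pconst_pow mult_ac)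
  have "pconst (inverse K) * (\<Prod>L \<in> sextactic_lines. linform (lf L)) = F1R * F2R * PsiE (pX^3) (pY^3) (pZ^3) (pX*pY*pZ)"
    unfolding eq mult.assoc[symmetric] pconst_mult[symmetric] using K0 by (simp add: pconst_1)
  thus ?thesis using K0 intp_F by (intro exI[of _ "inverse K"]) simp
qed

end
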